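(* Let $A_{00}\subset A_{01}\subset A_{11}$ and $A_{00}\subset A_{10}\subset A_{11}$ be unital inclusions of multi-matrix algebras forming a commuting square (with respect to a faithful tracial state $\mathrm{tr}$ on $A_{11}$ and the $\mathrm{tr}$-preserving conditional expectations $E_{ij}:A_{11}\to A_{ij}$, i.e. $E_{01}E_{10}=E_{00}$). Let $A_{ij}$ have $n_{ij}$ simple summands, let $T_{ij}^{kl}$ be the inclusion matrix of $A_{ij}\subset A_{kl}$, let $v^{11}=(v^{11}_k)_{k=1}^{n_{11}}$ be the trace vector of $\mathrm{tr}$ and $v^{ij}=(v^{ij}_k)_{k=1}^{n_{ij}}$ the trace vector of the restriction of $\mathrm{tr}$ to $A_{ij}$. Then for all $1\le p<\infty$, all $a_1,\dots,a_{n_{11}}\ge0$ and all $1\le i\le n_{00}$, $$\left(\sum_{j=1}^{n_{10}}\left(\sum_{l=1}^{n_{11}} \frac{(T_{10}^{11})_{jl}\, a_lv_l^{11}}{v_j^{10}}\right)^p \frac{(T_{00}^{10})_{ij}\, v_j^{10}}{v_i^{00}}\right)^{1/p} \le \sum_{k=1}^{n_{01}}\left(\sum_{l=1}^{n_{11}} \frac{(T_{01}^{11})_{kl}\, a_l^pv_l^{11}}{v_k^{01}}\right)^{1/p}\frac{(T_{00}^{01})_{ik}\, v_k^{01}}{v_i^{00}}.$$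
   Context: A multi-matrix algebra is a finite direct sum $\bigoplus_i M_{k_i}(\mathbb{C})$. For a unital inclusion $A_0=\bigoplus_{i=1}^{n_0}M_{k_i}(\mathbb{C})\subset\bigoplus_{j=1}^{n_1}M_{l_j}(\mathbb{C})=A_1$, the inclusion matrix $T=(m_{ij})$ has $m_{ij}$ equal to the multiplicity of the summand $M_{k_i}(\mathbb{C})$ in $M_{l_j}(\mathbb{C})$. For a faithful tracial state $\mathrm{tr}$ on $A_1$, the trace vector is $(v_j)_j$ with $v_j=\mathrm{tr}(q_j)$ for $q_j$ a minimal projection in the $j$-th summand. *)

theory Defs
  imports "HOL-Analysis.Analysis"
begin

text \<open>We realise every multi-matrix algebra concretely as a unital *-subalgebra of the
full matrix algebra M_N(C), represented by the type complex^'n^'n (N = CARD('n)).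
Every finite-dimensional C*-algebra (= multi-matrix algebra) arises this way.\<close>

type_synonym 'n cmat = "complex^'n^'n"

definition adj :: "'n::finite cmat \<Rightarrow> 'n cmat" where
  "adj A = (\<chi> i j. cnj (A $ j $ i))"

definition cscale :: "complex \<Rightarrow> 'n::finite cmat \<Rightarrow> 'n cmat" where
  "cscale c A = (\<chi> i j. c * A $ i $ j)"

definition mtrace :: "'n::finite cmat \<Rightarrow> complex" where
  "mtrace A = (\<Sum>i\<in>UNIV. A $ i $ i)"

definition unital_star_subalg :: "'n::finite cmat set \<Rightarrow> bool" where
  "unital_star_subalg S \<longleftrightarrow>
     mat 1 \<in> S \<and> 0 \<in> S \<and>
     (\<forall>x\<in>S. \<forall>y\<in>S. x + y \<in> S \<and> x ** y \<in> S) \<and>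
     (\<forall>c. \<forall>x\<in>S. cscale c x \<in> S) \<and>
     (\<forall>x\<in>S. adj x \<in> S)"

definition faithful_tracial_state :: "('n::finite cmat \<Rightarrow> complex) \<Rightarrow> 'n cmat set \<Rightarrow> bool" where
  "faithful_tracial_state tr S \<longleftrightarrow>
     (\<forall>x\<in>S. \<forall>y\<in>S. tr (x + y) = tr x + tr y) \<and>
     (\<forall>c. \<forall>x\<in>S. tr (cscale c x) = c * tr x) \<and>
     tr (mat 1) = 1 \<and>
     (\<forall>x\<in>S. \<forall>y\<in>S. tr (x ** y) = tr (y ** x)) \<and>
     (\<forall>x\<in>S. Im (tr (adj x ** x)) = 0 \<and> Re (tr (adj x ** x)) \<ge> 0) \<and>
     (\<forall>x\<in>S. tr (adj x ** x) = 0 \<longrightarrow> x = 0)"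

definition tr_cond_exp ::
  "('n::finite cmat \<Rightarrow> complex) \<Rightarrow> 'n cmat set \<Rightarrow> 'n cmat set \<Rightarrow> ('n cmat \<Rightarrow> 'n cmat) \<Rightarrow> bool" where
  "tr_cond_exp tr S B E \<longleftrightarrow>
     (\<forall>x\<in>S. E x \<in> B) \<and>
     (\<forall>x\<in>S. \<forall>y\<in>S. E (x + y) = E x + E y) \<and>
     (\<forall>c. \<forall>x\<in>S. E (cscale c x) = cscale c (E x)) \<and>
     (\<forall>b\<in>B. E b = b) \<and>
     (\<forall>b1\<in>B. \<forall>b2\<in>B. \<forall>x\<in>S. E (b1 ** x ** b2) = b1 ** E x ** b2) \<and>
     (\<forall>x\<in>S. tr (E x) = tr x)"

definition is_proj :: "'n::finite cmat \<Rightarrow> bool" where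
  "is_proj p \<longleftrightarrow> p ** p = p \<and> adj p = p"

definition min_projs :: "'n::finite cmat set \<Rightarrow> 'n cmat set" where
  "min_projs S = {p. p \<in> S \<and> is_proj p \<and> p \<noteq> 0 \<and>
       (\<forall>q\<in>S. is_proj q \<and> q \<noteq> 0 \<and> q ** p = q \<longrightarrow> q = p)}"

definition central_proj :: "'n::finite cmat set \<Rightarrow> 'n cmat \<Rightarrow> bool" where
  "central_proj S p \<longleftrightarrow> p \<in> S \<and> is_proj p \<and> (\<forall>x\<in>S. p ** x = x ** p)"

text \<open>Minimal central projections of S; they index the simple summands of S.\<close>
definition summands :: "'n::finite cmat set \<Rightarrow> 'n cmat set" where
  "summands S = {z. central_proj S z \<and> z \<noteq> 0 \<and>
       (\<forall>q. central_proj S q \<and> q \<noteq> 0 \<and> q ** z = q \<longrightarrow> q = z)}"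

definition minproj_in :: "'n::finite cmat set \<Rightarrow> 'n cmat \<Rightarrow> 'n cmat" where
  "minproj_in S z = (SOME e. e \<in> min_projs S \<and> e ** z = e)"

definition trace_vec :: "('n::finite cmat \<Rightarrow> complex) \<Rightarrow> 'n cmat set \<Rightarrow> 'n cmat \<Rightarrow> real" where
  "trace_vec tr S z = Re (tr (minproj_in S z))"

text \<open>Inclusion matrix of A \<subseteq> B: entry (z,w) for summands z of A and w of B is the
multiplicity of the z-th summand of A in the w-th summand of B, i.e. the number of
minimal projections of wB into which e w splits (e a minimal projection of A under z);
measured via the matrix trace (= rank in C^N) of these projections.\<close>
definition incl_mat :: "'n::finite cmat set \<Rightarrow> 'n cmat set \<Rightarrow> 'n cmat \<Rightarrow> 'n cmat \<Rightarrow> real" where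
  "incl_mat A B z w =
     Re (mtrace (minproj_in A z ** w)) / Re (mtrace (minproj_in B w))"

end

theory Submission
  imports Defs
begin

lemma adj_nth[simp]: "adj A $ i $ j = cnj (A $ j $ i)"
  by (simp add: adj_def)
lemma cscale_nth[simp]: "cscale c A $ i $ j = c * A $ i $ j"
  by (simp add: cscale_def)
lemma mm_nth: "(A ** B) $ i $ j = (\<Sum>k\<in>UNIV. A $ i $ k * B $ k $ j)"
  by (simp add: matrix_matrix_mult_def)

lemma adj_adj[simp]: "adj (adj A) = A"
  by (simp add: vec_eq_iff)
lemma adj_mult: "adj (A ** B) = adj B ** adj A"
  by (simp add: vec_eq_iff mm_nth mult.commute)
lemma adj_add[simp]: "adj (A + B) = adj A + adj B"
  by (simp add: vec_eq_iff)
lemma adj_diff[simp]: "adj (A - B) = adj A - adj B"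
  by (simp add: vec_eq_iff)
lemma adj_uminus[simp]: "adj (- A) = - adj A"
  by (simp add: vec_eq_iff)
lemma adj_zero[simp]: "adj 0 = 0"
  by (simp add: vec_eq_iff)
lemma adj_one[simp]: "adj (mat 1) = mat 1"
  by (simp add: vec_eq_iff mat_def)
lemma adj_cscale[simp]: "adj (cscale c A) = cscale (cnj c) (adj A)"
  by (simp add: vec_eq_iff)
lemma adj_sum: "adj (sum F I) = sum (\<lambda>i. adj (F i)) I"
  by (induction I rule: infinite_finite_induct) auto

lemma cscale_mult_left[simp]: "cscale c A ** B = cscale c (A ** B)"
  by (simp add: vec_eq_iff mm_nth sum_distrib_left mult.assoc)
lemma cscale_mult_right[simp]: "A ** cscale c B = cscale c (A ** B)"
  by (simp add: vec_eq_iff mm_nth sum_distrib_left mult_ac)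
lemma cscale_cscale[simp]: "cscale c (cscale d A) = cscale (c * d) A"
  by (simp add: vec_eq_iff mult.assoc)
lemma cscale_one[simp]: "cscale 1 A = A"
  by (simp add: vec_eq_iff)
lemma cscale_zero[simp]: "cscale 0 A = 0"
  by (simp add: vec_eq_iff)
lemma cscale_zero_right[simp]: "cscale c 0 = 0"
  by (simp add: vec_eq_iff)
lemma cscale_add: "cscale c (A + B) = cscale c A + cscale c B"
  by (simp add: vec_eq_iff algebra_simps)
lemma cscale_add_left: "cscale (c + d) A = cscale c A + cscale d A"
  by (simp add: vec_eq_iff algebra_simps)
lemma cscale_diff: "cscale c (A - B) = cscale c A - cscale c B"
  by (simp add: vec_eq_iff algebra_simps)
lemma cscale_minus1: "cscale (-1) A = - A"
  by (simp add: vec_eq_iff)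
lemma cscale_eq_0_iff[simp]: "cscale c A = 0 \<longleftrightarrow> c = 0 \<or> A = 0"
  by (auto simp: vec_eq_iff)
lemma cscale_mat1_mult[simp]: "cscale c (mat 1) ** A = cscale c A"
  by simp

lemma mm_add_right: "A ** (B + C) = A ** B + A ** C"
  by (rule matrix_add_ldistrib)
lemma mm_add_left: "(A + B) ** (C :: 'n::finite cmat) = A ** C + B ** C"
  by (simp add: vec_eq_iff mm_nth algebra_simps sum.distrib)
lemma mm_diff_right: "A ** (B - C) = A ** B - A ** (C :: 'n::finite cmat)"
  by (simp add: vec_eq_iff mm_nth algebra_simps sum_subtractf)
lemma mm_diff_left: "(A - B) ** (C :: 'n::finite cmat) = A ** C - B ** C"
  by (simp add: vec_eq_iff mm_nth algebra_simps sum_subtractf)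
lemma mm_zero_left[simp]: "(0::'n::finite cmat) ** A = 0"
  by (simp add: vec_eq_iff mm_nth)
lemma mm_zero_right[simp]: "(A::'n::finite cmat) ** 0 = 0"
  by (simp add: vec_eq_iff mm_nth)
lemma mm_sum_left: "sum F I ** (C :: 'n::finite cmat) = sum (\<lambda>i. F i ** C) I"
  by (induction I rule: infinite_finite_induct) (auto simp: mm_add_left)
lemma mm_sum_right: "(C :: 'n::finite cmat) ** sum F I = sum (\<lambda>i. C ** F i) I"
  by (induction I rule: infinite_finite_induct) (auto simp: mm_add_right)

lemma mtrace_add: "mtrace (A + B) = mtrace A + mtrace B"
  by (simp add: mtrace_def sum.distrib)
lemma mtrace_diff: "mtrace (A - B) = mtrace A - mtrace B"
  by (simp add: mtrace_def sum_subtractf)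
lemma mtrace_cscale: "mtrace (cscale c A) = c * mtrace A"
  by (simp add: mtrace_def sum_distrib_left)
lemma mtrace_comm: "mtrace (A ** B) = mtrace (B ** A)"
  unfolding mtrace_def mm_nth by (subst sum.swap) (simp add: mult.commute)
lemma mtrace_adj_self_real: "mtrace (adj A ** A) = complex_of_real (\<Sum>i\<in>UNIV. \<Sum>k\<in>UNIV. (Re (A $ k $ i))\<^sup>2 + (Im (A $ k $ i))\<^sup>2)"
  unfolding mtrace_def mm_nth by (simp add: mult.commute complex_mult_cnj)

lemma mtrace_adj_self_zero: "mtrace (adj A ** A) = 0 \<Longrightarrow> A = 0"
proof -
  assume "mtrace (adj A ** A) = 0"
  then have "(\<Sum>i\<in>UNIV. \<Sum>k\<in>UNIV. (Re (A $ k $ i))\<^sup>2 + (Im (A $ k $ i))\<^sup>2) = 0"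
    unfolding mtrace_adj_self_real by (simp only: of_real_eq_0_iff)
  then have "\<forall>i k. (Re (A $ k $ i))\<^sup>2 + (Im (A $ k $ i))\<^sup>2 = 0"
    by (simp add: sum_nonneg_eq_0_iff sum_nonneg)
  then show "A = 0" by (simp add: vec_eq_iff complex_eq_iff)
qed

lemma adj_self_zero: "adj A ** A = 0 \<Longrightarrow> A = 0"
  using mtrace_adj_self_zero[of A] by (simp add: mtrace_def)

lemma adj_eq_0_iff[simp]: "adj A = 0 \<longleftrightarrow> A = 0"
  by (metis adj_adj adj_zero)

lemma self_adj_zero: "A ** adj A = 0 \<Longrightarrow> A = 0"
  using adj_self_zero[of "adj A"] by simp

lemma inner_complex_cnj: "inner (a::complex) b = Re (cnj a * b)"
  by (simp add: inner_complex_def)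

lemma mv_nth: "(A *v x) $ i = (\<Sum>j\<in>UNIV. A $ i $ j * x $ j)"
  by (simp add: matrix_vector_mult_def)

lemma herm_inner:
  fixes w :: "'n::finite cmat"
  assumes h: "adj w = w"
  shows "inner (w *v x) y = inner x (w *v y)"
proof -
  have wc: "w $ j $ i = cnj (w $ i $ j)" for i j
    using arg_cong[OF h, of "\<lambda>A. A $ j $ i"] by simp
  have trm: "inner (w $ a $ b * x $ b) (y $ a) = inner (x $ b) (w $ b $ a * y $ a)" for a b
    unfolding inner_complex_cnj wc[of b a] by (simp add: mult_ac)
  have 1: "inner (w *v x) y = (\<Sum>a\<in>UNIV. \<Sum>b\<in>UNIV. inner (w $ a $ b * x $ b) (y $ a))"
    unfolding inner_vec_def mv_nth by (simp only: inner_sum_left)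
  have 2: "inner x (w *v y) = (\<Sum>a\<in>UNIV. \<Sum>b\<in>UNIV. inner (x $ a) (w $ a $ b * y $ b))"
    unfolding inner_vec_def mv_nth by (simp only: inner_sum_right)
  also have "\<dots> = (\<Sum>b\<in>UNIV. \<Sum>a\<in>UNIV. inner (x $ a) (w $ a $ b * y $ b))"
    by (rule sum.swap)
  finally show ?thesis unfolding 1 trm by simp
qed

lemma mv_scaleR: "(A :: 'n::finite cmat) *v (c *\<^sub>R x) = c *\<^sub>R (A *v x)"
  by (rule linear_scale[OF matrix_vector_mul_linear])

lemma mv_uminus: "(- A) *v x = - (A *v (x :: complex^'n::finite))"
  by (simp add: vec_eq_iff matrix_vector_mult_def sum_negf)

lemma quad_aux:
  fixes be c :: real
  assumes c0: "0 \<le> c" and be0: "0 \<le> be" and h: "\<And>s. 0 \<le> 2 * (s * be) + s\<^sup>2 * c"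
  shows "be = 0"
proof (rule ccontr)
  assume "be \<noteq> 0"
  then have bp: "0 < be" using be0 by simp
  define t where "t = be / (c + 1)"
  have c1: "0 < c + 1" using c0 by simp
  have tp: "0 < t" unfolding t_def using bp c1 by (rule divide_pos_pos)
  have "0 \<le> 2 * ((- t) * be) + (- t)\<^sup>2 * c" by (rule h)
  moreover have "2 * ((- t) * be) + (- t)\<^sup>2 * c = t * (t * c - 2 * be)"
    by (simp add: power2_eq_square right_diff_distrib)
  ultimately have "0 \<le> t * (t * c - 2 * be)" by simp
  then have A: "0 \<le> t * c - 2 * be" using tp by (simp add: zero_le_mult_iff)
  have "t * c = be * (c / (c + 1))" unfolding t_def by simp
  moreover have "c / (c + 1) \<le> 1" using c1 by simp
  then have "be * (c / (c + 1)) \<le> be * 1" using bp by (intro mult_left_mono) auto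
  ultimately have "t * c \<le> be" by simp
  then show False using A bp by linarith
qed

lemma psd_zero:
  fixes B :: "'a::real_inner \<Rightarrow> 'a"
  assumes lin: "linear B" and sa: "\<And>x y. inner (B x) y = inner x (B y)"
    and psd: "\<And>x. 0 \<le> inner (B x) x" and z: "inner (B v) v = 0"
  shows "B v = 0"
proof -
  define b where "b = B v"
  define c where "c = inner (B b) b"
  define be where "be = inner b b"
  have c0: "0 \<le> c" using psd by (simp add: c_def)
  have hs: "0 \<le> 2 * (s * be) + s\<^sup>2 * c" for s
  proof -
    have "0 \<le> inner (B (v + s *\<^sub>R b)) (v + s *\<^sub>R b)" by (rule psd)
    also have "B (v + s *\<^sub>R b) = B v + s *\<^sub>R B b"
      by (simp add: linear_add[OF lin] linear_scale[OF lin])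
    also have "inner (B v + s *\<^sub>R B b) (v + s *\<^sub>R b) = inner (B v) v + s * inner (B v) b + s * inner (B b) v + s\<^sup>2 * inner (B b) b"
      by (simp add: inner_add_left inner_add_right power2_eq_square algebra_simps)
    also have "inner (B b) v = inner b (B v)" by (rule sa)
    finally have "0 \<le> inner (B v) v + s * inner (B v) b + s * inner b (B v) + s\<^sup>2 * inner (B b) b" .
    then have "0 \<le> s * be + s * be + s\<^sup>2 * c"
      using z by (simp add: b_def[symmetric] c_def[symmetric] be_def[symmetric])
    then show ?thesis by linarith
  qed
  have "be = 0" by (rule quad_aux[OF c0 _ hs]) (simp add: be_def)
  then show ?thesis by (simp add: be_def b_def)
qed

lemma max_eig:
  fixes w :: "'n::finite cmat"
  assumes h: "adj w = w"
  shows "\<exists>v l. norm v = 1 \<and> w *v v = l *\<^sub>R v \<and> (\<forall>u. inner (w *v u) u \<le> l * (norm u)\<^sup>2)"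
proof -
  let ?Q = "\<lambda>v. inner (w *v v) v"
  have cont: "continuous_on (sphere 0 1) ?Q"
    by (intro continuous_intros linear_continuous_on) (simp add: linear_conv_bounded_linear[symmetric])
  have ne: "sphere (0::complex^'n) 1 \<noteq> {}"
  proof -
    obtain k :: 'n where True by simp
    have "axis k (1::complex) \<noteq> 0" by (simp add: axis_eq_0_iff)
    then have "axis k (1::complex) /\<^sub>R norm (axis k (1::complex)) \<in> sphere 0 1"
      by (simp add: sphere_def dist_norm)
    then show ?thesis by blast
  qed
  obtain v where v: "v \<in> sphere 0 1" and vmax: "\<And>u. u \<in> sphere 0 1 \<Longrightarrow> ?Q u \<le> ?Q v"
    using continuous_attains_sup[OF compact_sphere ne cont] by blast
  define l where "l = ?Q v"
  have nv: "norm v = 1" using v by (simp add: sphere_def dist_norm)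
  have le: "?Q u \<le> l * (norm u)\<^sup>2" for u
  proof (cases "u = 0")
    case False
    let ?u = "u /\<^sub>R norm u"
    have "?u \<in> sphere 0 1" using False by (simp add: sphere_def dist_norm)
    then have "?Q ?u \<le> l" unfolding l_def by (rule vmax)
    moreover have "?Q ?u = ?Q u / (norm u)\<^sup>2"
      by (simp add: mv_scaleR power2_eq_square divide_inverse mult_ac)
    ultimately show ?thesis using False by (simp add: divide_le_eq)
  qed simp
  define B where "B x = l *\<^sub>R x - w *v x" for x
  have linB: "linear B"
    by (rule linearI) (simp_all add: B_def matrix_vector_right_distrib mv_scaleR algebra_simps)
  have saB: "inner (B x) y = inner x (B y)" for x y
    unfolding B_def using herm_inner[OF h] by (simp add: inner_diff_left inner_diff_right inner_commute)
  have psdB: "0 \<le> inner (B x) x" for x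
    using le[of x] by (simp add: B_def inner_diff_left power2_norm_eq_inner)
  have zB: "inner (B v) v = 0"
    using nv by (simp add: B_def inner_diff_left l_def power2_norm_eq_inner[symmetric])
  have "B v = 0" by (rule psd_zero[OF linB saB psdB zB])
  then have "w *v v = l *\<^sub>R v" by (simp add: B_def)
  then show ?thesis using nv le by blast
qed

lemma herm_eig:
  fixes w :: "'n::finite cmat"
  assumes h: "adj w = w" and nz: "w \<noteq> 0"
  shows "\<exists>v l. v \<noteq> 0 \<and> l \<noteq> 0 \<and> w *v v = l *\<^sub>R v"
proof -
  obtain v l where v: "norm v = 1" "w *v v = l *\<^sub>R v" and lu: "\<And>u. inner (w *v u) u \<le> l * (norm u)\<^sup>2"
    using max_eig[OF h] by blast
  have h2: "adj (- w) = - w" using h by simp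
  obtain v' l' where v': "norm v' = 1" "(- w) *v v' = l' *\<^sub>R v'" and lu': "\<And>u. inner ((- w) *v u) u \<le> l' * (norm u)\<^sup>2"
    using max_eig[OF h2] by blast
  show ?thesis
  proof (cases "l \<noteq> 0")
    case True then show ?thesis using v by (intro exI[of _ v] exI[of _ l]) auto
  next
    case False
    note l0 = False
    show ?thesis
    proof (cases "l' \<noteq> 0")
      case True
      have "- (w *v v') = l' *\<^sub>R v'" using v'(2) by (simp add: mv_uminus)
      then have "w *v v' = - (l' *\<^sub>R v')" by (metis minus_minus)
      then have "w *v v' = (- l') *\<^sub>R v'" by simp
      then show ?thesis using True v' by (intro exI[of _ v'] exI[of _ "- l'"]) auto
    next
      case False
      have Q0: "inner (w *v u) u = 0" for u
        using lu[of u] lu'[of u] l0 False by (simp add: mv_uminus)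
      have "w *v x = 0" for x
      proof -
        have "inner (w *v x) y = 0" for y
        proof -
          have "inner (w *v (x + y)) (x + y) = inner (w *v x) x + inner (w *v y) y + inner (w *v x) y + inner (w *v y) x"
            by (simp add: matrix_vector_right_distrib inner_add_left inner_add_right)
          moreover have "inner (w *v y) x = inner (w *v x) y"
            using herm_inner[OF h] by (simp add: inner_commute)
          ultimately show ?thesis using Q0 by simp
        qed
        from this[of "w *v x"] show ?thesis by simp
      qed
      then have "w = 0" by (subst matrix_eq) simp
      then show ?thesis using nz by simp
    qed
  qed
qed

definition closed_alg :: "'n::finite cmat set \<Rightarrow> bool" where
  "closed_alg X \<longleftrightarrow> (\<forall>x\<in>X. \<forall>y\<in>X. x + y \<in> X \<and> x ** y \<in> X) \<and> (\<forall>c. \<forall>x\<in>X. cscale c x \<in> X)"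

definition gen :: "'n::finite cmat \<Rightarrow> 'n cmat set" where
  "gen t = {w. \<forall>X. closed_alg X \<and> t \<in> X \<longrightarrow> w \<in> X}"

definition rk :: "'n::finite cmat \<Rightarrow> nat" where
  "rk A = dim (range (\<lambda>x. A *v x))"

lemma closed_algD:
  assumes "closed_alg X" "x \<in> X" "y \<in> X"
  shows "x + y \<in> X" "x ** y \<in> X" "cscale c x \<in> X" "x - y \<in> X" "0 \<in> X"
proof -
  show "x + y \<in> X" "x ** y \<in> X" "cscale c x \<in> X" using assms by (auto simp: closed_alg_def)
  have "cscale (-1) y \<in> X" using assms by (auto simp: closed_alg_def)
  then have "x + cscale (-1) y \<in> X" using assms by (auto simp: closed_alg_def)
  then show "x - y \<in> X" by (simp add: cscale_minus1)
  have "cscale 0 x \<in> X" using assms unfolding closed_alg_def by blast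
  then show "0 \<in> X" by simp
qed

lemma closed_algI:
  assumes "\<And>x y. x \<in> X \<Longrightarrow> y \<in> X \<Longrightarrow> x + y \<in> X"
    and "\<And>x y. x \<in> X \<Longrightarrow> y \<in> X \<Longrightarrow> x ** y \<in> X"
    and "\<And>c x. x \<in> X \<Longrightarrow> cscale c x \<in> X"
  shows "closed_alg X"
  using assms by (auto simp: closed_alg_def)

lemma gen_closed: "closed_alg (gen t)"
  by (auto simp: closed_alg_def gen_def)

lemma gen_self: "t \<in> gen t"
  by (auto simp: gen_def)

lemma gen_sub: "closed_alg X \<Longrightarrow> t \<in> X \<Longrightarrow> w \<in> gen t \<Longrightarrow> w \<in> X"
  by (auto simp: gen_def)

lemma gen_adj:
  assumes h: "adj t = t" and w: "w \<in> gen t"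
  shows "adj w \<in> gen t"
proof -
  have "closed_alg {w. adj w \<in> gen t}"
    by (rule closed_algI) (auto simp: adj_mult intro: closed_algD[OF gen_closed])
  moreover have "t \<in> {w. adj w \<in> gen t}" using h gen_self by simp
  ultimately show ?thesis using gen_sub[OF _ _ w] by blast
qed

lemma comm_closed: "closed_alg {w. w ** y = y ** (w :: 'n::finite cmat)}"
  by (rule closed_algI) (auto simp: mm_add_left mm_add_right matrix_mul_assoc, metis matrix_mul_assoc)

lemma gen_comm_with:
  assumes "y ** t = t ** y" "w \<in> gen t"
  shows "w ** y = y ** w"
  using gen_sub[OF comm_closed, of t y w] assms by auto

lemma gen_comm:
  assumes u: "u \<in> gen t" and w: "w \<in> gen t"
  shows "u ** w = w ** u"
proof -
  have "closed_alg {u. \<forall>w\<in>gen t. u ** w = w ** u}"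
    by (rule closed_algI) (auto simp: mm_add_left mm_add_right matrix_mul_assoc, metis matrix_mul_assoc)
  moreover have "t \<in> {u. \<forall>w\<in>gen t. u ** w = w ** u}"
    using gen_comm_with[of t t] by auto
  ultimately show ?thesis using gen_sub u w by blast
qed

lemma range_mv_subspace: "subspace (range (\<lambda>x. (A :: 'n::finite cmat) *v x))"
  unfolding subspace_def
proof (intro conjI ballI allI)
  show "0 \<in> range (\<lambda>x. A *v x)" by (rule range_eqI[of _ _ 0]) simp
  fix x y assume "x \<in> range (\<lambda>x. A *v x)" "y \<in> range (\<lambda>x. A *v x)"
  then obtain a b where "x = A *v a" "y = A *v b" by blast
  then show "x + y \<in> range (\<lambda>x. A *v x)" by (auto intro!: range_eqI[of _ _ "a + b"] simp: matrix_vector_right_distrib)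
next
  fix c x assume "x \<in> range (\<lambda>x. A *v x)"
  then obtain a where "x = A *v a" by blast
  then show "c *\<^sub>R x \<in> range (\<lambda>x. A *v x)" by (auto intro!: range_eqI[of _ _ "c *\<^sub>R a"] simp: mv_scaleR)
qed

lemma rk_le:
  assumes "\<And>x. \<exists>y. A *v x = B *v y"
  shows "rk A \<le> rk B"
  unfolding rk_def by (rule dim_subset) (use assms in \<open>force\<close>)

lemma rk_less:
  fixes A B :: "'n::finite cmat"
  assumes sub: "\<And>x. \<exists>y. A *v x = B *v y" and v: "v = B *v z" and nv: "\<And>y. v \<noteq> A *v y"
  shows "rk A < rk B"
  unfolding rk_def
proof (rule dim_psubset)
  have eA: "span (range (\<lambda>x. A *v x)) = range (\<lambda>x. A *v x)" by (rule span_eq_iff[THEN iffD2, OF range_mv_subspace])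
  have eB: "span (range (\<lambda>x. B *v x)) = range (\<lambda>x. B *v x)" by (rule span_eq_iff[THEN iffD2, OF range_mv_subspace])
  show "span (range (\<lambda>x. A *v x)) \<subset> span (range (\<lambda>x. B *v x))"
    unfolding eA eB using sub v nv by fastforce
qed

lemma herm_kill:
  fixes u :: "'n::finite cmat"
  assumes h: "adj u = u" and uv: "u *v v = 0" and v: "v = u *v y"
  shows "v = 0"
proof -
  have "inner v v = inner (u *v y) v" using v by simp
  also have "\<dots> = inner y (u *v v)" by (rule herm_inner[OF h])
  finally show ?thesis using uv by simp
qed

lemma cscale_real_mv: "cscale (complex_of_real c) A *v x = c *\<^sub>R (A *v x)"
proof -
  have "(cscale (complex_of_real c) A *v x) $ i = (c *\<^sub>R (A *v x)) $ i" for i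
  proof -
    have "(c *\<^sub>R (A *v x)) $ i = c *\<^sub>R ((A *v x) $ i)" by (rule vector_scaleR_component)
    also have "\<dots> = complex_of_real c * ((A *v x) $ i)" by (rule scaleR_conv_of_real)
    finally show ?thesis by (simp add: matrix_vector_mult_def sum_distrib_left mult.assoc)
  qed
  then show ?thesis by (simp add: vec_eq_iff)
qed

lemma mm_mv: "(A ** B) *v x = A *v (B *v x)"
  by (simp add: matrix_vector_mul_assoc)

lemma mv_diff_left: "((A :: 'n::finite cmat) - B) *v x = A *v x - B *v x"
  by (simp add: matrix_vector_mult_diff_rdistrib)

lemma adj_cscale_real[simp]: "adj (cscale (complex_of_real c) A) = cscale (complex_of_real c) (adj A)"
  by simp

lemma SP:
  fixes t :: "'n::finite cmat"
  assumes h: "adj t = t" and nz: "t \<noteq> 0"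
  shows "\<exists>r \<mu>. r \<in> gen t \<and> is_proj r \<and> r \<noteq> 0 \<and> \<mu> \<noteq> 0 \<and> t ** r = cscale (complex_of_real \<mu>) r"
proof -
  define H where "H = {w \<in> gen t. adj w = w \<and> w \<noteq> 0}"
  have tH: "t \<in> H" using h nz gen_self by (simp add: H_def)
  obtain w where wH: "w \<in> H" and wmin: "\<And>w'. w' \<in> H \<Longrightarrow> rk w \<le> rk w'"
    using ex_has_least_nat[of "\<lambda>w. w \<in> H" t rk] tH by blast
  have wg: "w \<in> gen t" and wh: "adj w = w" and wnz: "w \<noteq> 0" using wH by (auto simp: H_def)
  have C: "u = 0" if ug: "u \<in> gen t" and uh: "adj u = u" and sub: "\<And>x. \<exists>y. u *v x = w *v y"
    and vnz: "v \<noteq> 0" and uv: "u *v v = 0" and vw: "v = w *v z" for u v z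
  proof (rule ccontr)
    assume "u \<noteq> 0"
    then have "u \<in> H" using ug uh by (simp add: H_def)
    then have "rk w \<le> rk u" by (rule wmin)
    moreover have "rk u < rk w"
      by (rule rk_less[OF sub vw]) (use herm_kill[OF uh uv] vnz in blast)
    ultimately show False by simp
  qed
  obtain v l where vnz: "v \<noteq> 0" and lnz: "l \<noteq> 0" and wv: "w *v v = l *\<^sub>R v"
    using herm_eig[OF wh wnz] by blast
  define u where "u = w ** w - cscale (complex_of_real l) w"
  have "u = 0"
  proof (rule C)
    show "u \<in> gen t" unfolding u_def using wg by (intro closed_algD[OF gen_closed])
    show "adj u = u" unfolding u_def using wh by (simp add: adj_mult)
    show "\<exists>y. u *v x = w *v y" for x
      by (rule exI[of _ "w *v x - l *\<^sub>R x"]) (simp add: u_def mv_diff_left mm_mv cscale_real_mv matrix_vector_mult_diff_distrib mv_scaleR)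
    show "v \<noteq> 0" by fact
    show "u *v v = 0" by (simp add: u_def mv_diff_left mm_mv cscale_real_mv wv mv_scaleR)
    show "v = w *v ((1 / l) *\<^sub>R v)" using lnz by (simp add: mv_scaleR wv)
  qed
  then have ww: "w ** w = cscale (complex_of_real l) w" by (simp add: u_def)
  define r where "r = cscale (complex_of_real (1 / l)) w"
  have rg: "r \<in> gen t" unfolding r_def using wg by (intro closed_algD[OF gen_closed])
  have rr: "r ** r = r" using lnz by (simp add: r_def ww power2_eq_square)
  have rh: "adj r = r" using wh by (simp add: r_def)
  have rnz: "r \<noteq> 0" using wnz lnz by (simp add: r_def)
  have rw: "r *v x = w *v ((1 / l) *\<^sub>R x)" for x unfolding r_def cscale_real_mv by (simp add: mv_scaleR)
  have tr_comm: "t ** r = r ** t" using gen_comm[OF gen_self rg] .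
  have trh: "adj (t ** r) = t ** r" using h rh tr_comm by (simp add: adj_mult)
  have trnz: "t ** r \<noteq> 0"
  proof
    assume tr0: "t ** r = 0"
    have "closed_alg {x. x ** r = 0}"
      by (rule closed_algI) (auto simp: mm_add_left matrix_mul_assoc[symmetric])
    then have "r ** r = 0" using gen_sub[of "{x. x ** r = 0}" t r] tr0 rg by blast
    then show False using rr rnz by simp
  qed
  obtain v' m where vnz': "v' \<noteq> 0" and mnz: "m \<noteq> 0" and trv: "(t ** r) *v v' = m *\<^sub>R v'"
    using herm_eig[OF trh trnz] by blast
  define u' where "u' = t ** r - cscale (complex_of_real m) r"
  have v'r: "v' = r *v ((1 / m) *\<^sub>R (t *v v'))"
  proof -
    have "v' = (1 / m) *\<^sub>R ((t ** r) *v v')" using mnz trv by simp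
    also have "\<dots> = r *v ((1 / m) *\<^sub>R (t *v v'))" by (simp add: tr_comm mm_mv mv_scaleR)
    finally show ?thesis .
  qed
  have rv': "r *v v' = v'"
    by (subst (2) v'r, subst v'r) (simp add: mm_mv[symmetric] rr)
  have "u' = 0"
  proof (rule C)
    show "u' \<in> gen t" unfolding u'_def using rg by (intro closed_algD[OF gen_closed] gen_self)
    show "adj u' = u'" unfolding u'_def using trh rh by simp
    show "\<exists>y. u' *v x = w *v y" for x
    proof -
      have "u' *v x = r *v (t *v x - m *\<^sub>R x)"
        by (simp add: u'_def tr_comm mv_diff_left mm_mv cscale_real_mv matrix_vector_mult_diff_distrib mv_scaleR)
      then show ?thesis using rw by metis
    qed
    show "v' \<noteq> 0" by fact
    show "u' *v v' = 0" by (simp add: u'_def mv_diff_left cscale_real_mv trv rv')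
    show "v' = w *v ((1 / l) *\<^sub>R ((1 / m) *\<^sub>R (t *v v')))" using v'r rw by simp
  qed
  then have "t ** r = cscale (complex_of_real m) r" by (simp add: u'_def)
  then show ?thesis using rg rr rh rnz mnz by (auto simp: is_proj_def)
qed

section \<open>Unital star subalgebras\<close>

lemma usaD:
  assumes "unital_star_subalg S"
  shows "mat 1 \<in> S" "0 \<in> S"
    "\<And>x y. x \<in> S \<Longrightarrow> y \<in> S \<Longrightarrow> x + y \<in> S"
    "\<And>x y. x \<in> S \<Longrightarrow> y \<in> S \<Longrightarrow> x ** y \<in> S"
    "\<And>x c. x \<in> S \<Longrightarrow> cscale c x \<in> S"
    "\<And>x. x \<in> S \<Longrightarrow> adj x \<in> S"
  using assms by (auto simp: unital_star_subalg_def)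

lemma usa_closed: "unital_star_subalg S \<Longrightarrow> closed_alg S"
  by (auto simp: unital_star_subalg_def closed_alg_def)

lemma usa_diff: "unital_star_subalg S \<Longrightarrow> x \<in> S \<Longrightarrow> y \<in> S \<Longrightarrow> x - y \<in> S"
  using closed_algD(4)[OF usa_closed] by blast

lemma usa_sum: "unital_star_subalg S \<Longrightarrow> (\<And>i. i \<in> I \<Longrightarrow> F i \<in> S) \<Longrightarrow> sum F I \<in> S"
  by (induction I rule: infinite_finite_induct) (auto intro: usaD)

lemma proj_le_sym:
  assumes "is_proj p" "is_proj q" "q ** p = q"
  shows "p ** q = q"
proof -
  have "p ** q = adj p ** adj q" using assms(1,2) by (simp add: is_proj_def)
  also have "\<dots> = adj (q ** p)" by (simp add: adj_mult)
  also have "\<dots> = q" using assms by (simp add: is_proj_def)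
  finally show ?thesis .
qed

lemma mm_assoc: "A ** B ** C = A ** (B ** (C :: 'n::finite cmat))"
  by (simp add: matrix_mul_assoc)

lemma exists_nonkilled: "(r :: 'n::finite cmat) \<noteq> 0 \<Longrightarrow> \<exists>z. r *v z \<noteq> 0"
  using matrix_eq[of r 0] by auto

lemma min_below:
  fixes P :: "'n::finite cmat"
  assumes Pr: "Pr P" and pp: "is_proj P" and pnz: "P \<noteq> 0"
  shows "\<exists>q. Pr q \<and> is_proj q \<and> q \<noteq> 0 \<and> q ** P = q \<and>
            (\<forall>q'. Pr q' \<and> is_proj q' \<and> q' \<noteq> 0 \<and> q' ** q = q' \<longrightarrow> q' = q)"
proof -
  define H where "H = {q. Pr q \<and> is_proj q \<and> q \<noteq> 0 \<and> q ** P = q}"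
  have PH: "P \<in> H" using assms by (simp add: H_def is_proj_def)
  obtain q where qH: "q \<in> H" and qmin: "\<And>q'. q' \<in> H \<Longrightarrow> rk q \<le> rk q'"
    using ex_has_least_nat[of "\<lambda>q. q \<in> H" P rk] PH by blast
  have q: "Pr q" "is_proj q" "q \<noteq> 0" "q ** P = q" using qH by (auto simp: H_def)
  have "q' = q" if q': "Pr q'" "is_proj q'" "q' \<noteq> 0" "q' ** q = q'" for q'
  proof (rule ccontr)
    assume ne: "q' \<noteq> q"
    have "q' ** P = q'" using q'(4) q(4) by (metis matrix_mul_assoc)
    then have "q' \<in> H" using q' by (simp add: H_def)
    then have "rk q \<le> rk q'" by (rule qmin)
    moreover have "rk q' < rk q"
    proof -
      have qq': "q ** q' = q'" by (rule proj_le_sym[OF q(2) q'(2) q'(4)])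
      have sub: "\<exists>y. q' *v x = q *v y" for x
        by (rule exI[of _ "q' *v x"]) (simp add: mm_mv[symmetric] qq')
      have "\<exists>z. \<forall>y. q *v z \<noteq> q' *v y"
      proof (rule ccontr)
        assume "\<not> ?thesis"
        then have "\<forall>z. \<exists>y. q *v z = q' *v y" by blast
        have "(q' ** q) *v z = q *v z" for z
        proof -
          obtain y where y: "q *v z = q' *v y" using \<open>\<forall>z. \<exists>y. q *v z = q' *v y\<close> by blast
          have "(q' ** q) *v z = q' *v (q' *v y)" by (simp add: mm_mv y)
          also have "\<dots> = q' *v y" using q'(2) by (simp add: mm_mv[symmetric] is_proj_def)
          finally show ?thesis using y by simp
        qed
        then have "q' ** q = q" using matrix_eq by blast
        then show False using q'(4) ne by simp
      qed
      then obtain z where "\<forall>y. q *v z \<noteq> q' *v y" by blast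
      then show ?thesis by (intro rk_less[OF sub refl]) auto
    qed
    ultimately show False by simp
  qed
  then show ?thesis using q by blast
qed

section \<open>Summands\<close>

lemma summandsD:
  assumes "z \<in> summands S"
  shows "z \<in> S" "is_proj z" "z \<noteq> 0" "\<And>x. x \<in> S \<Longrightarrow> z ** x = x ** z"
    "\<And>q. central_proj S q \<Longrightarrow> q \<noteq> 0 \<Longrightarrow> q ** z = q \<Longrightarrow> q = z"
  using assms unfolding summands_def central_proj_def by blast+

lemma summand_central_proj: "z \<in> summands S \<Longrightarrow> central_proj S z"
  by (simp add: summands_def)

lemma min_projsD:
  assumes "f \<in> min_projs S"
  shows "f \<in> S" "is_proj f" "f \<noteq> 0"
    "\<And>q. q \<in> S \<Longrightarrow> is_proj q \<Longrightarrow> q \<noteq> 0 \<Longrightarrow> q ** f = q \<Longrightarrow> q = f"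
  using assms unfolding min_projs_def by blast+

lemma min_proj_exists:
  assumes "P \<in> S" "is_proj P" "P \<noteq> 0"
  shows "\<exists>f. f \<in> min_projs S \<and> f ** P = f"
proof -
  obtain q where q: "q \<in> S" "is_proj q" "q \<noteq> 0" "q ** P = q"
    "\<forall>q'. q' \<in> S \<and> is_proj q' \<and> q' \<noteq> 0 \<and> q' ** q = q' \<longrightarrow> q' = q"
    using min_below[of "\<lambda>q. q \<in> S" P, OF assms] by blast
  then have "q \<in> min_projs S" unfolding min_projs_def by blast
  then show ?thesis using q(4) by blast
qed

lemma minproj_in:
  assumes "z \<in> summands S"
  shows "minproj_in S z \<in> min_projs S" "minproj_in S z ** z = minproj_in S z"
proof -
  have "\<exists>e. e \<in> min_projs S \<and> e ** z = e"
    by (rule min_proj_exists[OF summandsD(1-3)[OF assms]])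
  then have "minproj_in S z \<in> min_projs S \<and> minproj_in S z ** z = minproj_in S z"
    unfolding minproj_in_def by (rule someI_ex)
  then show "minproj_in S z \<in> min_projs S" "minproj_in S z ** z = minproj_in S z" by auto
qed

lemma summands_orth:
  assumes usa: "unital_star_subalg S" and z: "z \<in> summands S" and z': "z' \<in> summands S" and ne: "z \<noteq> z'"
  shows "z ** z' = 0"
proof (rule ccontr)
  assume nz: "z ** z' \<noteq> 0"
  have c: "z ** z' = z' ** z" using summandsD(4)[OF z summandsD(1)[OF z']] .
  have pz: "is_proj z" "is_proj z'" using summandsD z z' by auto
  have cp: "central_proj S (z ** z')"
    unfolding central_proj_def
  proof (intro conjI ballI)
    show "z ** z' \<in> S" using usaD(4)[OF usa summandsD(1)[OF z] summandsD(1)[OF z']] .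
    have "z ** z' ** (z ** z') = z ** (z' ** z) ** z'" by (simp add: mm_assoc)
    also have "\<dots> = (z ** z) ** (z' ** z')" by (subst c[symmetric]) (simp add: mm_assoc)
    also have "\<dots> = z ** z'" using pz by (simp add: is_proj_def)
    finally show "is_proj (z ** z')" using pz c by (simp add: is_proj_def adj_mult)
    fix x assume "x \<in> S"
    have "z ** z' ** x = z ** (x ** z')" using summandsD(4)[OF z' \<open>x \<in> S\<close>] by (simp add: mm_assoc)
    also have "\<dots> = x ** (z ** z')" using summandsD(4)[OF z \<open>x \<in> S\<close>] by (simp add: mm_assoc[symmetric])
    finally show "z ** z' ** x = x ** (z ** z')" .
  qed
  have "z ** z' ** z = z ** (z' ** z)" by (simp add: mm_assoc)
  also have "\<dots> = z ** (z ** z')" by (simp only: c[symmetric])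
  also have "\<dots> = z ** z'" using pz by (simp add: mm_assoc[symmetric] is_proj_def)
  finally have "z ** z' ** z = z ** z'" .
  then have "z ** z' = z" using summandsD(5)[OF z cp nz] by simp
  moreover have "z ** z' ** z' = z ** z'" using pz by (simp add: mm_assoc is_proj_def)
  then have "z ** z' = z'" using summandsD(5)[OF z' cp nz] by simp
  ultimately show False using ne by simp
qed

lemma scaleR_cscale: "c *\<^sub>R (A :: 'n::finite cmat) = cscale (complex_of_real c) A"
proof -
  have "(c *\<^sub>R A) $ i $ j = complex_of_real c * A $ i $ j" for i j
  proof -
    have "(c *\<^sub>R A) $ i $ j = c *\<^sub>R (A $ i $ j)" by simp
    also have "\<dots> = complex_of_real c * A $ i $ j" by (rule scaleR_conv_of_real)
    finally show ?thesis .
  qed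
  then show ?thesis by (simp add: vec_eq_iff)
qed

lemma summands_finite:
  assumes usa: "unital_star_subalg S"
  shows "finite (summands S)"
proof -
  have "independent (summands S)"
    unfolding independent_explicit_finite_subsets
  proof (intro allI impI ballI)
    fix T u v
    assume T: "T \<subseteq> summands S" "finite T" and s: "(\<Sum>v\<in>T. u v *\<^sub>R v) = 0" and v: "v \<in> T"
    have vS: "v \<in> summands S" using T v by blast
    have orth: "\<And>a b. a \<in> T \<Longrightarrow> b \<in> T \<Longrightarrow> a \<noteq> b \<Longrightarrow> a ** b = 0"
      using T summands_orth[OF usa] by blast
    have e1: "(\<Sum>w\<in>T. u w *\<^sub>R w) ** v = (\<Sum>w\<in>T. cscale (complex_of_real (u w)) (w ** v))"
      unfolding mm_sum_left scaleR_cscale cscale_mult_left ..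
    have e2: "(\<Sum>w\<in>T. cscale (complex_of_real (u w)) (w ** v)) = cscale (complex_of_real (u v)) (v ** v) + (\<Sum>w\<in>T - {v}. cscale (complex_of_real (u w)) (w ** v))"
      by (rule sum.remove[OF T(2) v])
    have e3: "(\<Sum>w\<in>T - {v}. cscale (complex_of_real (u w)) (w ** v)) = 0"
      using v orth by (intro sum.neutral) auto
    have vv: "v ** v = v" "v \<noteq> 0" using summandsD(2,3)[OF vS] by (auto simp: is_proj_def)
    have "cscale (complex_of_real (u v)) v = 0"
      using e1 e2 e3 s vv by simp
    then show "u v = 0" using vv by simp
  qed
  then show ?thesis by (rule finiteI_independent)
qed

lemma sum_orth_proj:
  assumes usa: "unital_star_subalg S" and T: "T \<subseteq> summands S"
  shows "sum (\<lambda>z. z) T ** sum (\<lambda>z. z) T = sum (\<lambda>z. z) T" "adj (sum (\<lambda>z. z) T) = sum (\<lambda>z. z) T"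
proof -
  have fin: "finite T" using summands_finite[OF usa] T finite_subset by blast
  have orth: "\<And>a b. a \<in> T \<Longrightarrow> b \<in> T \<Longrightarrow> a \<noteq> b \<Longrightarrow> a ** b = 0"
    using T summands_orth[OF usa] by blast
  have "sum (\<lambda>z. z) T ** sum (\<lambda>z. z) T = (\<Sum>z\<in>T. \<Sum>z'\<in>T. z ** z')"
    by (simp add: mm_sum_left mm_sum_right, rule sum.swap)
  also have "\<dots> = (\<Sum>z\<in>T. z)"
  proof (rule sum.cong[OF refl])
    fix z assume z: "z \<in> T"
    have "(\<Sum>z'\<in>T. z ** z') = z ** z + (\<Sum>z'\<in>T - {z}. z ** z')" by (rule sum.remove[OF fin z])
    also have "(\<Sum>z'\<in>T - {z}. z ** z') = 0"
      using z orth by (intro sum.neutral) blast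
    finally show "(\<Sum>z'\<in>T. z ** z') = z" using summandsD(2) T z by (auto simp: is_proj_def)
  qed
  finally show "sum (\<lambda>z. z) T ** sum (\<lambda>z. z) T = sum (\<lambda>z. z) T" .
  show "adj (sum (\<lambda>z. z) T) = sum (\<lambda>z. z) T"
    using summandsD(2) T by (auto simp: adj_sum is_proj_def intro!: sum.cong)
qed

lemma summands_sum:
  assumes usa: "unital_star_subalg S"
  shows "sum (\<lambda>z. z) (summands S) = mat 1"
proof (rule ccontr)
  define Q where "Q = sum (\<lambda>z. z) (summands S)"
  define R where "R = mat 1 - Q"
  assume "Q \<noteq> mat 1"
  then have Rnz: "R \<noteq> 0" by (simp add: R_def)
  have fin: "finite (summands S)" by (rule summands_finite[OF usa])
  have Qp: "Q ** Q = Q" "adj Q = Q" using sum_orth_proj[OF usa subset_refl] by (auto simp: Q_def)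
  have QS: "Q \<in> S" unfolding Q_def by (rule usa_sum[OF usa]) (simp add: summandsD)
  have Qc: "Q ** x = x ** Q" if "x \<in> S" for x
    unfolding Q_def mm_sum_left mm_sum_right using summandsD(4) that by (auto intro!: sum.cong)
  have Rp: "is_proj R" unfolding is_proj_def R_def using Qp
    by (simp add: mm_diff_left mm_diff_right)
  have RS: "R \<in> S" unfolding R_def by (rule usa_diff[OF usa usaD(1)[OF usa] QS])
  have Rc: "central_proj S R" unfolding central_proj_def using Rp RS Qc
    by (auto simp: R_def mm_diff_left mm_diff_right)
  obtain q where q: "central_proj S q" "is_proj q" "q \<noteq> 0" "q ** R = q"
    and qmin: "\<And>q'. central_proj S q' \<and> is_proj q' \<and> q' \<noteq> 0 \<and> q' ** q = q' \<Longrightarrow> q' = q"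
    using min_below[of "central_proj S" R, OF Rc Rp Rnz] by blast
  have qs: "q \<in> summands S" unfolding summands_def using q qmin by (auto simp: central_proj_def)
  have "q ** Q = (\<Sum>z\<in>summands S. q ** z)" by (simp add: Q_def mm_sum_right)
  also have "\<dots> = q ** q + (\<Sum>z\<in>summands S - {q}. q ** z)" by (rule sum.remove[OF fin qs])
  also have "(\<Sum>z\<in>summands S - {q}. q ** z) = 0"
    using qs summands_orth[OF usa] by (intro sum.neutral) blast
  finally have "q ** Q = q" using q(2) by (simp add: is_proj_def)
  then have "q ** R = 0" by (simp add: R_def mm_diff_right)
  then show False using q by simp
qed

lemma herm_compress:
  assumes usa: "unital_star_subalg S" and f: "f \<in> min_projs S" and hS: "h \<in> S"
    and hh: "adj h = h" and hf: "h ** f = h" and fh: "f ** h = h"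
  shows "\<exists>\<mu>::real. h = cscale (complex_of_real \<mu>) f"
proof (cases "h = 0")
  case True then show ?thesis by (intro exI[of _ 0]) simp
next
  case False
  obtain r \<mu> where r: "r \<in> gen h" "is_proj r" "r \<noteq> 0" and hr: "h ** r = cscale (complex_of_real \<mu>) r"
    using SP[OF hh False] by blast
  define X where "X = {w \<in> S. w ** f = w \<and> f ** w = w}"
  have cX: "closed_alg X"
  proof (rule closed_algI)
    fix x y assume x: "x \<in> X" and y: "y \<in> X"
    show "x + y \<in> X" using x y usaD(3)[OF usa] by (simp add: X_def mm_add_left mm_add_right)
    have "x ** y ** f = x ** y" using y by (simp add: X_def mm_assoc)
    moreover have "f ** (x ** y) = x ** y" using x by (simp add: X_def mm_assoc[symmetric])
    ultimately show "x ** y \<in> X" using x y usaD(4)[OF usa] by (simp add: X_def)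
  next
    fix c x assume x: "x \<in> X"
    then show "cscale c x \<in> X" using usaD(5)[OF usa] by (simp add: X_def)
  qed
  have "h \<in> X" using hS hf fh by (simp add: X_def)
  then have "r \<in> X" using gen_sub[OF cX _ r(1)] by blast
  then have "r \<in> S" "r ** f = r" by (auto simp: X_def)
  then have "r = f" using min_projsD(4)[OF f] r by blast
  then show ?thesis using hr hf by (intro exI[of _ \<mu>]) simp
qed

lemma compress:
  assumes usa: "unital_star_subalg S" and f: "f \<in> min_projs S" and x: "x \<in> S"
  shows "\<exists>c. f ** x ** f = cscale c f"
proof -
  have fS: "f \<in> S" and fp: "f ** f = f" "adj f = f" using min_projsD[OF f] by (auto simp: is_proj_def)
  define y where "y = f ** x ** f"
  have yS: "y \<in> S" unfolding y_def by (rule usaD(4)[OF usa usaD(4)[OF usa fS x] fS])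
  have fy: "f ** y = y" unfolding y_def using fp by (simp add: mm_assoc[symmetric])
  have yf: "y ** f = y" unfolding y_def using fp by (simp add: mm_assoc)
  have fy': "f ** adj y = adj y"
  proof -
    have "adj (y ** f) = adj y" using yf by simp
    then show ?thesis using fp by (simp add: adj_mult)
  qed
  have yf': "adj y ** f = adj y"
  proof -
    have "adj (f ** y) = adj y" using fy by simp
    then show ?thesis using fp by (simp add: adj_mult)
  qed
  define h1 where "h1 = cscale (1/2) (y + adj y)"
  define h2 where "h2 = cscale (- \<i> / 2) (y - adj y)"
  have ayS: "adj y \<in> S" by (rule usaD(6)[OF usa yS])
  have h1S: "h1 \<in> S" unfolding h1_def by (rule usaD(5)[OF usa usaD(3)[OF usa yS ayS]])
  have h2S: "h2 \<in> S" unfolding h2_def by (rule usaD(5)[OF usa usa_diff[OF usa yS ayS]])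
  have h1h: "adj h1 = h1" unfolding h1_def by (simp add: vec_eq_iff)
  have h2h: "adj h2 = h2" unfolding h2_def by (simp add: vec_eq_iff algebra_simps)
  have h1f: "h1 ** f = h1" "f ** h1 = h1" unfolding h1_def using fy yf fy' yf'
    by (simp_all add: mm_add_left mm_add_right)
  have h2f: "h2 ** f = h2" "f ** h2 = h2" unfolding h2_def using fy yf fy' yf'
    by (simp_all add: mm_diff_left mm_diff_right)
  obtain m1 where m1: "h1 = cscale (complex_of_real m1) f" using herm_compress[OF usa f h1S h1h h1f] by blast
  obtain m2 where m2: "h2 = cscale (complex_of_real m2) f" using herm_compress[OF usa f h2S h2h h2f] by blast
  have "y = h1 + cscale \<i> h2" unfolding h1_def h2_def by (simp add: vec_eq_iff field_simps)
  also have "\<dots> = cscale (complex_of_real m1 + \<i> * complex_of_real m2) f"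
    by (simp add: m1 m2 cscale_add_left)
  finally show ?thesis unfolding y_def by blast
qed

definition central_in :: "'n::finite cmat set \<Rightarrow> 'n cmat \<Rightarrow> bool" where
  "central_in S x \<longleftrightarrow> (\<forall>s\<in>S. x ** s = s ** x)"

lemma central_kill:
  assumes usa: "unital_star_subalg S" and xS: "x \<in> S" and xc: "central_in S x"
    and z: "z \<in> summands S" and f: "f \<in> min_projs S" and fz: "f ** z = f" and xf: "x ** f = 0"
  shows "x ** z = 0"
proof -
  have zS: "z \<in> S" and zp: "is_proj z" and zc: "\<And>s. s \<in> S \<Longrightarrow> z ** s = s ** z"
    using summandsD[OF z] by auto
  have fS: "f \<in> S" and fp: "is_proj f" and fnz: "f \<noteq> 0" using min_projsD[OF f] by auto
  have zf: "z ** f = f" by (rule proj_le_sym[OF zp fp fz])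
  define y where "y = x ** z"
  have yS: "y \<in> S" unfolding y_def using usaD(4)[OF usa xS zS] .
  have yc: "y ** s = s ** y" if "s \<in> S" for s
  proof -
    have "y ** s = x ** (s ** z)" unfolding y_def using zc[OF that] by (simp add: mm_assoc)
    also have "\<dots> = (x ** s) ** z" by (simp add: mm_assoc)
    also have "\<dots> = s ** y" unfolding y_def using xc that unfolding central_in_def by (simp add: mm_assoc)
    finally show ?thesis .
  qed
  have ayc: "adj y ** s = s ** adj y" if "s \<in> S" for s
  proof -
    have "adj s \<in> S" using usaD(6)[OF usa that] .
    then have "y ** adj s = adj s ** y" by (rule yc)
    then have "adj (y ** adj s) = adj (adj s ** y)" by simp
    then show ?thesis by (simp add: adj_mult)
  qed
  define h where "h = adj y ** y"
  have hS: "h \<in> S" unfolding h_def using usaD(4)[OF usa usaD(6)[OF usa yS] yS] .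
  have hh: "adj h = h" unfolding h_def by (simp add: adj_mult)
  have hc: "h ** s = s ** h" if "s \<in> S" for s
  proof -
    have "h ** s = adj y ** (y ** s)" by (simp add: h_def mm_assoc)
    also have "\<dots> = (adj y ** s) ** y" using yc[OF that] by (simp add: mm_assoc)
    also have "\<dots> = s ** h" using ayc[OF that] by (simp add: h_def mm_assoc)
    finally show ?thesis .
  qed
  have hf: "h ** f = 0"
  proof -
    have "h ** f = adj y ** (x ** (z ** f))" by (simp add: h_def y_def mm_assoc)
    then show ?thesis using zf xf by simp
  qed
  have hz: "h ** z = h"
    using zp by (simp add: h_def y_def mm_assoc is_proj_def)
  have "h = 0"
  proof (rule ccontr)
    assume hnz: "h \<noteq> 0"
    obtain r \<mu> where r: "r \<in> gen h" "is_proj r" "r \<noteq> 0"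
      using SP[OF hh hnz] by blast
    define X where "X = {w \<in> S. (\<forall>s\<in>S. w ** s = s ** w) \<and> w ** f = 0 \<and> w ** z = w}"
    have cX: "closed_alg X"
    proof (rule closed_algI)
      fix a b assume a: "a \<in> X" and b: "b \<in> X"
      have aS: "a \<in> S" and ac: "\<And>s. s \<in> S \<Longrightarrow> a ** s = s ** a" and af: "a ** f = 0" and az: "a ** z = a"
        using a unfolding X_def by blast+
      have bS: "b \<in> S" and bc: "\<And>s. s \<in> S \<Longrightarrow> b ** s = s ** b" and bf: "b ** f = 0" and bz: "b ** z = b"
        using b unfolding X_def by blast+
      have "a + b \<in> S" by (rule usaD(3)[OF usa aS bS])
      moreover have "(a + b) ** s = s ** (a + b)" if "s \<in> S" for s
        using ac[OF that] bc[OF that] by (simp add: mm_add_left mm_add_right)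
      moreover have "(a + b) ** f = 0" using af bf by (simp add: mm_add_left)
      moreover have "(a + b) ** z = a + b" using az bz by (simp add: mm_add_left)
      ultimately show "a + b \<in> X" unfolding X_def by blast
      have "a ** b \<in> S" by (rule usaD(4)[OF usa aS bS])
      moreover have "a ** b ** s = s ** (a ** b)" if "s \<in> S" for s
      proof -
        have "a ** b ** s = a ** (s ** b)" using bc[OF that] by (simp add: mm_assoc)
        also have "\<dots> = (a ** s) ** b" by (simp add: mm_assoc)
        also have "\<dots> = s ** (a ** b)" using ac[OF that] by (simp add: mm_assoc)
        finally show ?thesis .
      qed
      moreover have "a ** b ** f = 0" using bf by (simp add: mm_assoc)
      moreover have "a ** b ** z = a ** b" using bz by (simp add: mm_assoc)
      ultimately show "a ** b \<in> X" unfolding X_def by blast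
    next
      fix c a assume a: "a \<in> X"
      have aS: "a \<in> S" and ac: "\<And>s. s \<in> S \<Longrightarrow> a ** s = s ** a" and af: "a ** f = 0" and az: "a ** z = a"
        using a unfolding X_def by blast+
      have "cscale c a \<in> S" by (rule usaD(5)[OF usa aS])
      moreover have "cscale c a ** s = s ** cscale c a" if "s \<in> S" for s
        using ac[OF that] by simp
      moreover have "cscale c a ** f = 0" using af by simp
      moreover have "cscale c a ** z = cscale c a" using az by simp
      ultimately show "cscale c a \<in> X" unfolding X_def by blast
    qed
    have "h \<in> X" using hS hc hf hz unfolding X_def by blast
    then have "r \<in> X" using gen_sub[OF cX _ r(1)] by blast
    then have rS: "r \<in> S" and rc: "\<forall>s\<in>S. r ** s = s ** r" and rf: "r ** f = 0" and rz: "r ** z = r"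
      unfolding X_def by blast+
    have "central_proj S r" using rS r(2) rc by (simp add: central_proj_def)
    then have "r = z" using summandsD(5)[OF z _ r(3) rz] by blast
    then have "f = 0" using rf zf by simp
    then show False using fnz by simp
  qed
  then show ?thesis using adj_self_zero[of y] by (simp add: h_def y_def)
qed

lemma central_scalar:
  assumes usa: "unital_star_subalg S" and xS: "x \<in> S" and xc: "central_in S x"
    and z: "z \<in> summands S" and f: "f \<in> min_projs S" and fz: "f ** z = f" and xf: "x ** f = cscale c f"
  shows "x ** z = cscale c z"
proof -
  define y where "y = x - cscale c (mat 1)"
  have yS: "y \<in> S" unfolding y_def using usa_diff[OF usa xS usaD(5)[OF usa usaD(1)[OF usa]]] .
  have yc: "central_in S y" using xc by (simp add: central_in_def y_def mm_diff_left mm_diff_right)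
  have "y ** f = 0" by (simp add: y_def mm_diff_left xf)
  then have "y ** z = 0" by (rule central_kill[OF usa yS yc z f fz])
  then show ?thesis by (simp add: y_def mm_diff_left)
qed

lemma rk_bound: "rk (A :: 'n::finite cmat) \<le> DIM(complex^'n)"
  unfolding rk_def by (rule dim_subset_UNIV)

lemma link_nonzero:
  fixes S :: "'n::finite cmat set"
  assumes usa: "unital_star_subalg S" and z: "z \<in> summands S"
    and f: "f \<in> min_projs S" and g: "g \<in> min_projs S" and fz: "f ** z = f" and gz: "g ** z = g"
  shows "\<exists>x\<in>S. g ** x ** f \<noteq> 0"
proof (rule ccontr)
  assume "\<not> ?thesis"
  then have gxf: "\<And>x. x \<in> S \<Longrightarrow> g ** x ** f = 0" by blast
  have fS: "f \<in> S" and fp: "is_proj f" and fnz: "f \<noteq> 0" using min_projsD[OF f] by auto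
  have gS: "g \<in> S" and gp: "is_proj g" and gnz: "g \<noteq> 0" using min_projsD[OF g] by auto
  have zS: "z \<in> S" and zp: "is_proj z" and zc: "\<And>s. s \<in> S \<Longrightarrow> z ** s = s ** z"
    using summandsD[OF z] by auto
  have one: "mat 1 \<in> S" by (rule usaD(1)[OF usa])
  define J where "J = {w \<in> S. \<forall>x\<in>S. g ** x ** w = 0 \<and> w ** x ** g = 0}"
  have JD: "w \<in> S" "\<And>x. x \<in> S \<Longrightarrow> g ** x ** w = 0" "\<And>x. x \<in> S \<Longrightarrow> w ** x ** g = 0" if "w \<in> J" for w
    using that unfolding J_def by blast+
  have JI: "w \<in> J" if "w \<in> S" "\<And>x. x \<in> S \<Longrightarrow> g ** x ** w = 0" "\<And>x. x \<in> S \<Longrightarrow> w ** x ** g = 0" for w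
    using that unfolding J_def by blast
  have Jleft: "s ** w \<in> J" if w: "w \<in> J" and s: "s \<in> S" for s w
  proof (rule JI)
    show "s ** w \<in> S" by (rule usaD(4)[OF usa s JD(1)[OF w]])
    fix x assume x: "x \<in> S"
    have "g ** x ** (s ** w) = g ** (x ** s) ** w" by (simp add: mm_assoc)
    also have "\<dots> = 0" by (rule JD(2)[OF w usaD(4)[OF usa x s]])
    finally show "g ** x ** (s ** w) = 0" .
    have "s ** w ** x ** g = s ** (w ** x ** g)" by (simp add: mm_assoc)
    then show "s ** w ** x ** g = 0" using JD(3)[OF w x] by simp
  qed
  have Jright: "w ** s \<in> J" if w: "w \<in> J" and s: "s \<in> S" for s w
  proof (rule JI)
    show "w ** s \<in> S" by (rule usaD(4)[OF usa JD(1)[OF w] s])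
    fix x assume x: "x \<in> S"
    have "g ** x ** (w ** s) = (g ** x ** w) ** s" by (simp add: mm_assoc)
    then show "g ** x ** (w ** s) = 0" using JD(2)[OF w x] by simp
    have "w ** s ** x ** g = w ** (s ** x) ** g" by (simp add: mm_assoc)
    also have "\<dots> = 0" by (rule JD(3)[OF w usaD(4)[OF usa s x]])
    finally show "w ** s ** x ** g = 0" .
  qed
  have gh: "adj g = g" using gp by (simp add: is_proj_def)
  have Jadj: "adj w \<in> J" if w: "w \<in> J" for w
  proof (rule JI)
    show "adj w \<in> S" by (rule usaD(6)[OF usa JD(1)[OF w]])
    fix x assume x: "x \<in> S"
    have ax: "adj x \<in> S" by (rule usaD(6)[OF usa x])
    have "g ** x ** adj w = adj (w ** adj x ** g)" using gh by (simp add: adj_mult mm_assoc)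
    then show "g ** x ** adj w = 0" using JD(3)[OF w ax] by simp
    have "adj w ** x ** g = adj (g ** adj x ** w)" using gh by (simp add: adj_mult mm_assoc)
    then show "adj w ** x ** g = 0" using JD(2)[OF w ax] by simp
  qed
  have Jadd: "a + b \<in> J" if a: "a \<in> J" and b: "b \<in> J" for a b
  proof (rule JI)
    show "a + b \<in> S" by (rule usaD(3)[OF usa JD(1)[OF a] JD(1)[OF b]])
    fix x assume x: "x \<in> S"
    show "g ** x ** (a + b) = 0" using JD(2)[OF a x] JD(2)[OF b x] by (simp add: mm_add_right)
    show "(a + b) ** x ** g = 0" using JD(3)[OF a x] JD(3)[OF b x] by (simp add: mm_add_left)
  qed
  have Jcs: "cscale c a \<in> J" if a: "a \<in> J" for a c
  proof (rule JI)
    show "cscale c a \<in> S" by (rule usaD(5)[OF usa JD(1)[OF a]])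
    fix x assume x: "x \<in> S"
    show "g ** x ** cscale c a = 0" using JD(2)[OF a x] by simp
    show "cscale c a ** x ** g = 0" using JD(3)[OF a x] by simp
  qed
  have fJ: "f \<in> J"
  proof (rule JI[OF fS])
    fix x assume x: "x \<in> S"
    show "g ** x ** f = 0" by (rule gxf[OF x])
    have ax: "adj x \<in> S" by (rule usaD(6)[OF usa x])
    have fh: "adj f = f" using fp by (simp add: is_proj_def)
    have "f ** x ** g = adj (g ** adj x ** f)" using gh fh by (simp add: adj_mult mm_assoc)
    then show "f ** x ** g = 0" using gxf[OF ax] by simp
  qed
  define Pk where "Pk k = (\<exists>q\<in>J. is_proj q \<and> rk q = k)" for k
  have rkb: "rk q \<le> DIM(complex^'n)" for q :: "'n cmat" unfolding rk_def by (rule dim_subset_UNIV)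
  have "Pk (rk f)" using fJ fp by (auto simp: Pk_def)
  moreover have "\<forall>k. Pk k \<longrightarrow> k \<le> DIM(complex^'n)" unfolding Pk_def using rkb by blast
  ultimately obtain k where "Pk k" and kmax: "\<And>k'. Pk k' \<Longrightarrow> k' \<le> k"
    using Nat.ex_has_greatest_nat[of Pk "rk f" "DIM(complex^'n)"] by blast
  then obtain q where qJ: "q \<in> J" and qp: "is_proj q" and qk: "rk q = k" by (auto simp: Pk_def)
  have qS: "q \<in> S" using JD(1)[OF qJ] .
  have qq: "q ** q = q" and qh: "adj q = q" using qp by (auto simp: is_proj_def)
  have oqS: "mat 1 - q \<in> S" by (rule usa_diff[OF usa one qS])
  have oqq: "(mat 1 - q) ** (mat 1 - q) = mat 1 - q" using qq by (simp add: mm_diff_left mm_diff_right)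
  have kill: "(mat 1 - q) ** x = 0" if x: "x \<in> J" for x
  proof -
    define y where "y = (mat 1 - q) ** x"
    have yJ: "y \<in> J" unfolding y_def by (rule Jleft[OF x oqS])
    define t where "t = y ** adj y"
    have tJ: "t \<in> J" unfolding t_def by (rule Jright[OF yJ usaD(6)[OF usa JD(1)[OF yJ]]])
    have th: "adj t = t" by (simp add: t_def adj_mult)
    have "t = 0"
    proof (rule ccontr)
      assume tnz: "t \<noteq> 0"
      obtain r \<mu> where r: "r \<in> gen t" "is_proj r" "r \<noteq> 0" using SP[OF th tnz] by blast
      define X where "X = {w \<in> J. (mat 1 - q) ** w = w}"
      have cX: "closed_alg X"
      proof (rule closed_algI)
        fix a b assume a: "a \<in> X" and b: "b \<in> X"
        have aJ: "a \<in> J" and aq: "(mat 1 - q) ** a = a" using a by (auto simp: X_def)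
        have bJ: "b \<in> J" and bq: "(mat 1 - q) ** b = b" using b by (auto simp: X_def)
        show "a + b \<in> X" using Jadd[OF aJ bJ] aq bq by (simp add: X_def mm_add_right)
        have "(mat 1 - q) ** (a ** b) = ((mat 1 - q) ** a) ** b" by (simp add: mm_assoc)
        then show "a ** b \<in> X" using Jright[OF aJ JD(1)[OF bJ]] aq by (simp add: X_def)
      next
        fix c a assume a: "a \<in> X"
        then show "cscale c a \<in> X" using Jcs by (auto simp: X_def)
      qed
      have "(mat 1 - q) ** t = t"
        unfolding t_def y_def by (simp add: mm_assoc[symmetric] oqq)
      then have "t \<in> X" using tJ by (simp add: X_def)
      then have "r \<in> X" using gen_sub[OF cX _ r(1)] by blast
      then have rJ: "r \<in> J" and rq: "(mat 1 - q) ** r = r" by (auto simp: X_def)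
      have rp: "r ** r = r" "adj r = r" using r(2) by (auto simp: is_proj_def)
      have qr: "q ** r = 0"
      proof -
        have "q ** r = q ** ((mat 1 - q) ** r)" using rq by simp
        also have "\<dots> = (q - q ** q) ** r" by (simp add: mm_assoc[symmetric] mm_diff_right)
        finally show ?thesis using qq by simp
      qed
      have rq0: "r ** q = 0"
      proof -
        have "adj (q ** r) = 0" using qr by simp
        then show ?thesis using rp qh by (simp add: adj_mult)
      qed
      have qrJ: "q + r \<in> J" by (rule Jadd[OF qJ rJ])
      have qrp: "is_proj (q + r)" unfolding is_proj_def
        using qq qh rp qr rq0 by (simp add: mm_add_left mm_add_right)
      have "rk q < rk (q + r)"
      proof -
        obtain z0 where z0: "r *v z0 \<noteq> 0" using exists_nonkilled[OF r(3)] by blast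
        have sub: "\<exists>y. q *v x = (q + r) *v y" for x
          by (rule exI[of _ "q *v x"]) (simp add: mm_mv[symmetric] mm_add_left qq rq0)
        have v: "r *v z0 = (q + r) *v (r *v z0)"
          by (simp add: mm_mv[symmetric] mm_add_left qr rp)
        have nv: "r *v z0 \<noteq> q *v y" for y
        proof
          assume e: "r *v z0 = q *v y"
          have "r *v z0 = r *v (r *v z0)" by (simp add: mm_mv[symmetric] rp)
          also have "\<dots> = 0" by (simp add: e mm_mv[symmetric] rq0)
          finally show False using z0 by simp
        qed
        show ?thesis by (rule rk_less[OF sub v nv])
      qed
      moreover have "rk (q + r) \<le> k" using kmax qrJ qrp by (auto simp: Pk_def)
      ultimately show False using qk by simp
    qed
    then show ?thesis using self_adj_zero[of y] by (simp add: t_def y_def)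
  qed
  have qx: "q ** x = x" if "x \<in> J" for x
    using kill[OF that] by (simp add: mm_diff_left)
  have xq: "x ** q = x" if "x \<in> J" for x
  proof -
    have "q ** adj x = adj x" by (rule qx[OF Jadj[OF that]])
    then have "adj (q ** adj x) = x" by simp
    then show ?thesis using qh by (simp add: adj_mult)
  qed
  have qc: "q ** s = s ** q" if s: "s \<in> S" for s
  proof -
    have "s ** q = q ** (s ** q)" using qx[OF Jleft[OF qJ s]] by simp
    also have "\<dots> = (q ** s) ** q" by (simp add: mm_assoc)
    also have "\<dots> = q ** s" using xq[OF Jright[OF qJ s]] by simp
    finally show ?thesis by simp
  qed
  have qf: "q ** f = f" by (rule qx[OF fJ])
  have zq_c: "z ** q = q ** z" by (rule zc[OF qS])
  have zf: "z ** f = f" by (rule proj_le_sym[OF zp fp fz])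
  have cp: "central_proj S (z ** q)"
    unfolding central_proj_def
  proof (intro conjI ballI)
    show "z ** q \<in> S" by (rule usaD(4)[OF usa zS qS])
    have "z ** q ** (z ** q) = z ** (q ** z) ** q" by (simp add: mm_assoc)
    also have "\<dots> = (z ** z) ** (q ** q)" by (simp add: zq_c[symmetric] mm_assoc)
    finally show "is_proj (z ** q)" using zp qq qh zq_c by (simp add: is_proj_def adj_mult)
    fix s assume s: "s \<in> S"
    have "z ** q ** s = z ** (s ** q)" using qc[OF s] by (simp add: mm_assoc)
    also have "\<dots> = s ** (z ** q)" using zc[OF s] by (simp add: mm_assoc[symmetric])
    finally show "z ** q ** s = s ** (z ** q)" .
  qed
  have zqf: "z ** q ** f = f" using qf zf by (simp add: mm_assoc)
  then have zqnz: "z ** q \<noteq> 0" using fnz by auto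
  have "z ** q ** z = z ** q"
    using zq_c zp by (simp add: mm_assoc is_proj_def)
  then have zqz: "z ** q = z" using summandsD(5)[OF z cp zqnz] by simp
  have "g ** mat 1 ** q = 0" by (rule JD(2)[OF qJ one])
  then have "g ** q = 0" by simp
  moreover have "g = g ** (z ** q)" using gz zqz by simp
  ultimately have "g = 0" using gz by (simp add: mm_assoc[symmetric])
  then show False using gnz by simp
qed

lemma mtrace_proj_pos:
  assumes "is_proj g" "g \<noteq> 0"
  shows "\<exists>b>0. mtrace g = complex_of_real b"
proof -
  have "mtrace g = mtrace (adj g ** g)" using assms(1) by (simp add: is_proj_def)
  also have "\<dots> = complex_of_real (\<Sum>i\<in>UNIV. \<Sum>k\<in>UNIV. (Re (g $ k $ i))\<^sup>2 + (Im (g $ k $ i))\<^sup>2)"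
    by (rule mtrace_adj_self_real)
  finally have e: "mtrace g = complex_of_real (\<Sum>i\<in>UNIV. \<Sum>k\<in>UNIV. (Re (g $ k $ i))\<^sup>2 + (Im (g $ k $ i))\<^sup>2)" .
  have "(\<Sum>i\<in>UNIV. \<Sum>k\<in>UNIV. (Re (g $ k $ i))\<^sup>2 + (Im (g $ k $ i))\<^sup>2) \<ge> 0"
    by (intro sum_nonneg) auto
  moreover have "(\<Sum>i\<in>UNIV. \<Sum>k\<in>UNIV. (Re (g $ k $ i))\<^sup>2 + (Im (g $ k $ i))\<^sup>2) \<noteq> 0"
  proof
    assume "(\<Sum>i\<in>UNIV. \<Sum>k\<in>UNIV. (Re (g $ k $ i))\<^sup>2 + (Im (g $ k $ i))\<^sup>2) = 0"
    then have "mtrace (adj g ** g) = 0" using mtrace_adj_self_real[of g] by simp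
    then have "g = 0" by (rule mtrace_adj_self_zero)
    then show False using assms by simp
  qed
  ultimately show ?thesis using e by (intro exI[of _ "\<Sum>i\<in>UNIV. \<Sum>k\<in>UNIV. (Re (g $ k $ i))\<^sup>2 + (Im (g $ k $ i))\<^sup>2"]) auto
qed

lemma mtrace_adj_pos:
  assumes "y \<noteq> 0"
  shows "\<exists>a>0. mtrace (adj y ** y) = complex_of_real a"
proof -
  have "(\<Sum>i\<in>UNIV. \<Sum>k\<in>UNIV. (Re (y $ k $ i))\<^sup>2 + (Im (y $ k $ i))\<^sup>2) \<ge> 0"
    by (intro sum_nonneg) auto
  moreover have "(\<Sum>i\<in>UNIV. \<Sum>k\<in>UNIV. (Re (y $ k $ i))\<^sup>2 + (Im (y $ k $ i))\<^sup>2) \<noteq> 0"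
  proof
    assume "(\<Sum>i\<in>UNIV. \<Sum>k\<in>UNIV. (Re (y $ k $ i))\<^sup>2 + (Im (y $ k $ i))\<^sup>2) = 0"
    then have "mtrace (adj y ** y) = 0" using mtrace_adj_self_real[of y] by simp
    then have "y = 0" by (rule mtrace_adj_self_zero)
    then show False using assms by simp
  qed
  ultimately show ?thesis using mtrace_adj_self_real[of y]
    by (intro exI[of _ "\<Sum>i\<in>UNIV. \<Sum>k\<in>UNIV. (Re (y $ k $ i))\<^sup>2 + (Im (y $ k $ i))\<^sup>2"]) auto
qed

lemma mp_equiv:
  fixes S :: "'n::finite cmat set"
  assumes usa: "unital_star_subalg S" and z: "z \<in> summands S"
    and f: "f \<in> min_projs S" and g: "g \<in> min_projs S" and fz: "f ** z = f" and gz: "g ** z = g"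
  shows "\<exists>u\<in>S. adj u ** u = g \<and> u ** adj u = f"
proof -
  have fS: "f \<in> S" and fp: "is_proj f" and fnz: "f \<noteq> 0" using min_projsD[OF f] by auto
  have gS: "g \<in> S" and gp: "is_proj g" and gnz: "g \<noteq> 0" using min_projsD[OF g] by auto
  have ff: "f ** f = f" "adj f = f" and gg: "g ** g = g" "adj g = g" using fp gp by (auto simp: is_proj_def)
  have ff': "f ** (f ** w) = f ** w" for w :: "'n cmat" using ff by (simp add: mm_assoc[symmetric])
  have gg': "g ** (g ** w) = g ** w" for w :: "'n cmat" using gg by (simp add: mm_assoc[symmetric])
  obtain x where xS: "x \<in> S" and ynz: "f ** x ** g \<noteq> 0"
    using link_nonzero[OF usa z g f gz fz] by blast
  define y where "y = f ** x ** g"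
  have axS: "adj x \<in> S" by (rule usaD(6)[OF usa xS])
  have e1S: "adj x ** f ** x \<in> S" by (rule usaD(4)[OF usa usaD(4)[OF usa axS fS] xS])
  have e2S: "x ** g ** adj x \<in> S" by (rule usaD(4)[OF usa usaD(4)[OF usa xS gS] axS])
  obtain mu where mu: "g ** (adj x ** f ** x) ** g = cscale mu g" using compress[OF usa g e1S] by blast
  obtain nu where nu: "f ** (x ** g ** adj x) ** f = cscale nu f" using compress[OF usa f e2S] by blast
  have yy1: "adj y ** y = cscale mu g"
  proof -
    have "adj y ** y = g ** (adj x ** f ** x) ** g"
      by (simp add: y_def adj_mult ff gg mm_assoc ff')
    then show ?thesis using mu by simp
  qed
  have yy2: "y ** adj y = cscale nu f"
  proof -
    have "y ** adj y = f ** (x ** g ** adj x) ** f"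
      by (simp add: y_def adj_mult ff gg mm_assoc gg')
    then show ?thesis using nu by simp
  qed
  have yg: "y ** g = y" by (simp add: y_def mm_assoc gg)
  have fy: "f ** y = y" by (simp add: y_def mm_assoc ff')
  have "y ** (adj y ** y) = (y ** adj y) ** y" by (simp add: mm_assoc)
  then have "cscale mu y = cscale nu y" using yy1 yy2 yg fy by simp
  then have "cscale (mu - nu) y = 0" by (simp add: vec_eq_iff algebra_simps)
  then have munu: "mu = nu" using ynz by (simp add: y_def)
  obtain a where a: "a > 0" "mtrace (adj y ** y) = complex_of_real a"
    using mtrace_adj_pos[of y] ynz by (auto simp: y_def)
  obtain b where b: "b > 0" "mtrace g = complex_of_real b" using mtrace_proj_pos[OF gp gnz] by blast
  have "mu * complex_of_real b = complex_of_real a" using yy1 a b by (simp add: mtrace_cscale)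
  then have mue: "mu = complex_of_real (a / b)" using b by (simp add: field_simps)
  define m where "m = a / b"
  have mp: "m > 0" using a b by (simp add: m_def)
  define c where "c = complex_of_real (1 / sqrt m)"
  define u where "u = cscale c y"
  have uS: "u \<in> S" unfolding u_def y_def by (rule usaD(5)[OF usa usaD(4)[OF usa usaD(4)[OF usa fS xS] gS]])
  have cc: "cnj c * c * complex_of_real m = 1"
  proof -
    have "cnj c * c * complex_of_real m = complex_of_real (1 / sqrt m * (1 / sqrt m) * m)"
      unfolding c_def by (simp only: complex_cnj_complex_of_real of_real_mult)
    also have "1 / sqrt m * (1 / sqrt m) * m = 1" using mp by (simp add: field_simps)
    finally show ?thesis by simp
  qed
  have mum: "mu = complex_of_real m" using mue by (simp add: m_def)
  have cc2: "cnj c * (c * mu) = 1" using cc mum by (simp add: mult.assoc)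
  have cc3: "c * (cnj c * mu) = 1" using cc2 by (simp add: mult.left_commute)
  have "adj u ** u = cscale (cnj c * c) (adj y ** y)"
    by (simp add: u_def mult.commute)
  also have "\<dots> = g" using cc2 by (simp only: yy1 cscale_cscale cscale_one mult.assoc)
  finally have A1: "adj u ** u = g" .
  have "u ** adj u = cscale (c * cnj c) (y ** adj y)"
    by (simp add: u_def mult.commute)
  also have "\<dots> = f" using cc3 munu by (simp only: yy2 cscale_cscale cscale_one mult.assoc)
  finally have A2: "u ** adj u = f" .
  show ?thesis using uS A1 A2 by blast
qed

definition tracial :: "'n::finite cmat set \<Rightarrow> ('n cmat \<Rightarrow> complex) \<Rightarrow> bool" where
  "tracial S \<phi> \<longleftrightarrow> (\<forall>x\<in>S. \<forall>y\<in>S. \<phi> (x + y) = \<phi> x + \<phi> y \<and> \<phi> (x ** y) = \<phi> (y ** x))"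

lemma factA:
  fixes S :: "'n::finite cmat set"
  assumes usa: "unital_star_subalg S" and z: "z \<in> summands S"
    and g: "g \<in> min_projs S" and gz: "g ** z = g"
  shows "P \<in> S \<Longrightarrow> is_proj P \<Longrightarrow> P ** z = P \<Longrightarrow> \<exists>n::nat. \<forall>\<phi>. tracial S \<phi> \<longrightarrow> \<phi> P = of_nat n * \<phi> g"
proof (induction "rk P" arbitrary: P rule: less_induct)
  case less
  note PS = less.prems(1) and Pp = less.prems(2) and Pz = less.prems(3)
  show ?case
  proof (cases "P = 0")
    case True
    have "\<phi> P = 0" if "tracial S \<phi>" for \<phi>
    proof -
      have "\<phi> (0 + 0) = \<phi> 0 + \<phi> 0" using that usaD(2)[OF usa] unfolding tracial_def by blast
      then show ?thesis using True by simp
    qed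
    then show ?thesis by (intro exI[of _ 0]) simp
  next
    case False
    obtain f where f: "f \<in> min_projs S" and fP: "f ** P = f" using min_proj_exists[OF PS Pp False] by blast
    have fS: "f \<in> S" and fp: "is_proj f" and fnz: "f \<noteq> 0" using min_projsD[OF f] by auto
    have ff: "f ** f = f" "adj f = f" and PP: "P ** P = P" "adj P = P" using fp Pp by (auto simp: is_proj_def)
    have Pf: "P ** f = f" by (rule proj_le_sym[OF Pp fp fP])
    have fz: "f ** z = f" using fP Pz by (metis mm_assoc)
    obtain u where uS: "u \<in> S" and u: "adj u ** u = g" "u ** adj u = f"
      using mp_equiv[OF usa z f g fz gz] by blast
    have auS: "adj u \<in> S" by (rule usaD(6)[OF usa uS])
    define P' where "P' = P - f"
    have P'S: "P' \<in> S" unfolding P'_def by (rule usa_diff[OF usa PS fS])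
    have P'p: "is_proj P'" unfolding is_proj_def P'_def
      using PP ff Pf fP by (simp add: mm_diff_left mm_diff_right)
    have P'z: "P' ** z = P'" unfolding P'_def using Pz fz by (simp add: mm_diff_left)
    have "rk P' < rk P"
    proof -
      obtain z0 where z0: "f *v z0 \<noteq> 0" using exists_nonkilled[OF fnz] by blast
      have PP': "P ** P' = P'" unfolding P'_def using PP Pf by (simp add: mm_diff_right)
      have sub: "\<exists>y. P' *v x = P *v y" for x
        by (rule exI[of _ "P' *v x"]) (simp add: mm_mv[symmetric] PP')
      have v: "f *v z0 = P *v (f *v z0)" by (simp add: mm_mv[symmetric] Pf)
      have nv: "f *v z0 \<noteq> P' *v y" for y
      proof
        assume e: "f *v z0 = P' *v y"
        have fP': "f ** P' = 0" unfolding P'_def using fP ff by (simp add: mm_diff_right)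
        have "f *v z0 = f *v (f *v z0)" by (simp add: mm_mv[symmetric] ff)
        also have "\<dots> = 0" by (simp add: e mm_mv[symmetric] fP')
        finally show False using z0 by simp
      qed
      show ?thesis by (rule rk_less[OF sub v nv])
    qed
    then obtain n where n: "\<forall>\<phi>. tracial S \<phi> \<longrightarrow> \<phi> P' = of_nat n * \<phi> g"
      using less.hyps P'S P'p P'z by blast
    have "\<phi> P = of_nat (Suc n) * \<phi> g" if tr: "tracial S \<phi>" for \<phi>
    proof -
      have "\<phi> f = \<phi> g"
      proof -
        have "\<phi> (u ** adj u) = \<phi> (adj u ** u)" using tr uS auS unfolding tracial_def by blast
        then show ?thesis using u by simp
      qed
      moreover have "\<phi> (P' + f) = \<phi> P' + \<phi> f" using tr P'S fS unfolding tracial_def by blast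
      moreover have "P' + f = P" by (simp add: P'_def)
      moreover have "\<phi> P' = of_nat n * \<phi> g" using n tr by blast
      ultimately show ?thesis by (simp add: algebra_simps)
    qed
    then show ?thesis by blast
  qed
qed

lemma L1_pos:
  fixes x c :: "'k \<Rightarrow> real"
  assumes fin: "finite K" and p: "1 \<le> p"
    and c: "\<And>k. k \<in> K \<Longrightarrow> 0 < c k" and x: "\<And>k. k \<in> K \<Longrightarrow> 0 < x k"
    and ne: "K \<noteq> {}"
  shows "(\<Sum>k\<in>K. x k) powr p \<le> (\<Sum>k\<in>K. c k) powr (p - 1) * (\<Sum>k\<in>K. x k powr p * c k powr (1 - p))"
proof -
  define C where "C = (\<Sum>k\<in>K. c k)"
  have C: "C > 0" unfolding C_def using c ne fin by (simp add: sum_pos)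
  have "(\<Sum>k\<in>K. (c k / C) *\<^sub>R (x k / c k)) powr p \<le> (\<Sum>k\<in>K. (c k / C) * (x k / c k) powr p)"
    apply (rule convex_on_sum[OF fin ne powr_convex[OF p]])
    using c x C by (auto simp: C_def sum_divide_distrib[symmetric] less_imp_le)
  moreover have "(\<Sum>k\<in>K. (c k / C) *\<^sub>R (x k / c k)) = (\<Sum>k\<in>K. x k) / C"
    using c by (auto simp: sum_divide_distrib intro!: sum.cong) (metis less_irrefl)
  moreover have "(\<Sum>k\<in>K. (c k / C) * (x k / c k) powr p) = (\<Sum>k\<in>K. x k powr p * c k powr (1 - p)) / C"
    unfolding sum_divide_distrib
  proof (rule sum.cong[OF refl])
    fix k assume k: "k \<in> K"
    have "c k / C * (x k / c k) powr p = c k powr 1 * c k powr (-p) * x k powr p / C"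
      using c[OF k] x[OF k] by (simp add: powr_divide powr_minus divide_simps)
    also have "\<dots> = x k powr p * (c k powr 1 * c k powr (-p)) / C"
      by (simp only: mult_ac)
    also have "c k powr 1 * c k powr (-p) = c k powr (1 - p)"
      by (simp only: powr_add[symmetric]) simp
    finally have "c k / C * (x k / c k) powr p = x k powr p * c k powr (1 - p) / C" by simp
    then show "c k / C * (x k / c k) powr p = x k powr p * c k powr (1 - p) / C" .
  qed
  ultimately have *: "((\<Sum>k\<in>K. x k) / C) powr p \<le> (\<Sum>k\<in>K. x k powr p * c k powr (1 - p)) / C"
    by simp
  have "(\<Sum>k\<in>K. x k) powr p = C powr p * ((\<Sum>k\<in>K. x k) / C) powr p"
    using C x by (simp add: powr_divide sum_nonneg less_imp_le)
  also have "\<dots> \<le> C powr p * ((\<Sum>k\<in>K. x k powr p * c k powr (1 - p)) / C)"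
    using mult_left_mono[OF *, of "C powr p"] C by simp
  also have "\<dots> = C powr (p - 1) * (\<Sum>k\<in>K. x k powr p * c k powr (1 - p))"
    using C by (simp add: powr_diff)
  finally show ?thesis unfolding C_def .
qed

lemma L1:
  fixes x c :: "'k \<Rightarrow> real"
  assumes fin: "finite K" and p: "1 \<le> p"
    and c: "\<And>k. k \<in> K \<Longrightarrow> 0 \<le> c k" and x: "\<And>k. k \<in> K \<Longrightarrow> 0 \<le> x k"
    and cx: "\<And>k. k \<in> K \<Longrightarrow> c k = 0 \<Longrightarrow> x k = 0"
  shows "(\<Sum>k\<in>K. x k) powr p \<le> (\<Sum>k\<in>K. c k) powr (p - 1) * (\<Sum>k\<in>{k\<in>K. 0 < c k}. x k powr p * c k powr (1 - p))"
proof -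
  define K2 where "K2 = {k\<in>K. 0 < x k}"
  define K1 where "K1 = {k\<in>K. 0 < c k}"
  have K21: "K2 \<subseteq> K1" using cx c x by (force simp: K1_def K2_def)
  have fin1: "finite K1" "finite K2" using fin by (auto simp: K1_def K2_def)
  have sx: "(\<Sum>k\<in>K. x k) = (\<Sum>k\<in>K2. x k)"
    unfolding K2_def by (rule sum.mono_neutral_right) (use fin x in \<open>auto simp: less_le\<close>)
  show ?thesis
  proof (cases "K2 = {}")
    case True
    then have "(\<Sum>k\<in>K. x k) = 0" using sx by simp
    then show ?thesis using p c x fin by (auto intro!: mult_nonneg_nonneg sum_nonneg)
  next
    case False
    have "(\<Sum>k\<in>K2. x k) powr p \<le> (\<Sum>k\<in>K2. c k) powr (p - 1) * (\<Sum>k\<in>K2. x k powr p * c k powr (1 - p))"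
      by (rule L1_pos[OF fin1(2) p _ _ False]) (use K21 in \<open>auto simp: K1_def K2_def\<close>)
    also have "\<dots> \<le> (\<Sum>k\<in>K. c k) powr (p - 1) * (\<Sum>k\<in>K1. x k powr p * c k powr (1 - p))"
    proof (rule mult_mono)
      show "(\<Sum>k\<in>K2. c k) powr (p - 1) \<le> (\<Sum>k\<in>K. c k) powr (p - 1)"
        apply (rule powr_mono2) using p apply simp
        using c K21 apply (force simp: K1_def intro!: sum_nonneg)
        apply (rule sum_mono2[OF fin]) using c by (auto simp: K2_def)
      show "(\<Sum>k\<in>K2. x k powr p * c k powr (1 - p)) \<le> (\<Sum>k\<in>K1. x k powr p * c k powr (1 - p))"
        by (rule sum_mono2[OF fin1(1) K21]) auto
    qed (auto intro!: sum_nonneg)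
    finally show ?thesis using sx by (simp add: K1_def)
  qed
qed

lemma comb:
  fixes om :: "'j \<Rightarrow> 'k \<Rightarrow> 'l \<Rightarrow> real" and a :: "'l \<Rightarrow> real"
    and y :: "'j \<Rightarrow> real" and w :: "'k \<Rightarrow> real"
  assumes finJ: "finite J" and finK: "finite K" and finL: "finite L"
    and p: "1 \<le> p" and V: "0 < V"
    and om: "\<And>j k l. j \<in> J \<Longrightarrow> k \<in> K \<Longrightarrow> l \<in> L \<Longrightarrow> 0 \<le> om j k l"
    and a: "\<And>l. l \<in> L \<Longrightarrow> 0 \<le> a l"
    and hjk: "\<And>j k. j \<in> J \<Longrightarrow> k \<in> K \<Longrightarrow>
       (\<Sum>l\<in>L. om j k l) * V = (\<Sum>k'\<in>K. \<Sum>l\<in>L. om j k' l) * (\<Sum>j'\<in>J. \<Sum>l\<in>L. om j' k l)"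
    and y0: "\<And>j. j \<in> J \<Longrightarrow> 0 \<le> y j"
    and hy: "\<And>j. j \<in> J \<Longrightarrow> 0 < (\<Sum>k\<in>K. \<Sum>l\<in>L. om j k l) \<Longrightarrow>
       y j * (\<Sum>k\<in>K. \<Sum>l\<in>L. om j k l) = (\<Sum>l\<in>L. a l * (\<Sum>k\<in>K. om j k l))"
    and w0: "\<And>k. k \<in> K \<Longrightarrow> 0 \<le> w k"
    and hw: "\<And>k. k \<in> K \<Longrightarrow> 0 < (\<Sum>j\<in>J. \<Sum>l\<in>L. om j k l) \<Longrightarrow>
       w k * (\<Sum>j\<in>J. \<Sum>l\<in>L. om j k l) = (\<Sum>l\<in>L. a l powr p * (\<Sum>j\<in>J. om j k l))"
  shows "(\<Sum>j\<in>J. y j powr p * (\<Sum>k\<in>K. \<Sum>l\<in>L. om j k l) / V) powr (1 / p)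
       \<le> (\<Sum>k\<in>K. w k powr (1 / p) * (\<Sum>j\<in>J. \<Sum>l\<in>L. om j k l) / V)"
proof -
  define A where "A j = (\<Sum>k\<in>K. \<Sum>l\<in>L. om j k l)" for j
  define G where "G k = (\<Sum>j\<in>J. \<Sum>l\<in>L. om j k l)" for k
  define N where "N k = w k powr (1 / p) * G k / V" for k
  define Lam where "Lam = (\<Sum>k\<in>K. N k)"
  define g where "g j k = (\<Sum>l\<in>L. a l * om j k l) / A j" for j k
  define Kp where "Kp = {k\<in>K. 0 < N k}"
  have p0: "0 < p" using p by simp
  have A0: "j \<in> J \<Longrightarrow> 0 \<le> A j" for j unfolding A_def using om by (auto intro!: sum_nonneg)
  have G0: "k \<in> K \<Longrightarrow> 0 \<le> G k" for k unfolding G_def using om by (auto intro!: sum_nonneg)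
  have N0: "k \<in> K \<Longrightarrow> 0 \<le> N k" for k unfolding N_def using G0 V by auto
  have Lam0: "0 \<le> Lam" unfolding Lam_def using N0 by (auto intro!: sum_nonneg)
  have g0: "j \<in> J \<Longrightarrow> k \<in> K \<Longrightarrow> 0 \<le> g j k" for j k
    unfolding g_def using A0 om a by (auto intro!: sum_nonneg divide_nonneg_nonneg)
  have finKp: "finite Kp" using finK by (simp add: Kp_def)
  \<comment> \<open>inner Jensen\<close>
  have inner: "g j k powr p * A j \<le> (G k / V) powr (p - 1) * (\<Sum>l\<in>L. a l powr p * om j k l)"
    if j: "j \<in> J" and k: "k \<in> K" and Ap: "0 < A j" for j k
  proof -
    define c where "c l = om j k l / A j" for l
    define x where "x l = a l * om j k l / A j" for l
    have "(\<Sum>l\<in>L. x l) powr p \<le> (\<Sum>l\<in>L. c l) powr (p - 1) * (\<Sum>l\<in>{l\<in>L. 0 < c l}. x l powr p * c l powr (1 - p))"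
      by (rule L1[OF finL p]) (use om[OF j k] a Ap in \<open>auto simp: c_def x_def\<close>)
    moreover have "(\<Sum>l\<in>L. x l) = g j k" by (simp add: x_def g_def sum_divide_distrib)
    moreover have "(\<Sum>l\<in>L. c l) = G k / V"
      using hjk[OF j k] Ap V by (simp add: c_def sum_divide_distrib[symmetric] A_def G_def field_simps)
    moreover have "(\<Sum>l\<in>{l\<in>L. 0 < c l}. x l powr p * c l powr (1 - p)) = (\<Sum>l\<in>L. a l powr p * om j k l) / A j"
    proof -
      have "(\<Sum>l\<in>{l\<in>L. 0 < c l}. x l powr p * c l powr (1 - p)) = (\<Sum>l\<in>{l\<in>L. 0 < c l}. a l powr p * c l)"
      proof (rule sum.cong[OF refl])
        fix l assume l: "l \<in> {l\<in>L. 0 < c l}"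
        have "x l = a l * c l" by (simp add: x_def c_def)
        then have "x l powr p * c l powr (1 - p) = a l powr p * (c l powr p * c l powr (1 - p))"
          using l a by (simp add: powr_mult)
        also have "c l powr p * c l powr (1 - p) = c l"
          using l by (simp add: powr_add[symmetric])
        finally show "x l powr p * c l powr (1 - p) = a l powr p * c l" .
      qed
      also have "\<dots> = (\<Sum>l\<in>L. a l powr p * c l)"
        by (rule sum.mono_neutral_left) (use finL om[OF j k] Ap in \<open>auto simp: c_def less_le\<close>)
      finally show ?thesis by (simp add: c_def sum_divide_distrib)
    qed
    ultimately have "g j k powr p \<le> (G k / V) powr (p - 1) * ((\<Sum>l\<in>L. a l powr p * om j k l) / A j)"
      by simp
    from mult_right_mono[OF this, of "A j"] show ?thesis using Ap by simp
  qed
  have gz: "g j k = 0" if j: "j \<in> J" and k: "k \<in> K" and Nz: "N k = 0" for j k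
  proof (cases "G k = 0")
    case True
    then have "\<forall>j'\<in>J. (\<Sum>l\<in>L. om j' k l) = 0"
      unfolding G_def using finJ finL om k by (subst (asm) sum_nonneg_eq_0_iff) (auto intro!: sum_nonneg)
    then have "(\<Sum>l\<in>L. om j k l) = 0" using j by auto
    then have "\<forall>l\<in>L. om j k l = 0"
      using j finL om k by (subst (asm) sum_nonneg_eq_0_iff) auto
    then show ?thesis by (simp add: g_def)
  next
    case False
    then have Gp: "0 < G k" using G0[OF k] by simp
    then have "w k = 0" using Nz V by (simp add: N_def)
    then have "(\<Sum>l\<in>L. a l powr p * (\<Sum>j\<in>J. om j k l)) = 0" using hw[OF k] Gp by (simp add: G_def)
    then have "\<forall>l\<in>L. a l powr p * (\<Sum>j\<in>J. om j k l) = 0"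
      using finL by (subst (asm) sum_nonneg_eq_0_iff) (auto intro!: mult_nonneg_nonneg sum_nonneg om k)
    then have "\<forall>l\<in>L. a l * om j k l = 0"
      using j finJ om k by (auto simp: sum_nonneg_eq_0_iff)
    then have "(\<Sum>l\<in>L. a l * om j k l) = 0" by (intro sum.neutral) auto
    then show ?thesis by (simp add: g_def)
  qed
  define B where "B j = Lam powr (p - 1) * (\<Sum>k\<in>Kp. N k powr (1 - p) * (G k / V) powr (p - 1) * (\<Sum>l\<in>L. a l powr p * om j k l))" for j
  have perj: "y j powr p * A j \<le> B j" if j: "j \<in> J" for j
  proof (cases "A j = 0")
    case True
    then show ?thesis unfolding B_def using Lam0 N0 G0 a om j V
      by (auto intro!: mult_nonneg_nonneg sum_nonneg simp: Kp_def)
  next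
    case False
    then have Ap: "0 < A j" using A0[OF j] by simp
    have yj: "y j = (\<Sum>k\<in>K. g j k)"
    proof -
      have "y j * A j = (\<Sum>k\<in>K. \<Sum>l\<in>L. a l * om j k l)"
        using hy[OF j] Ap by (simp add: A_def sum_distrib_left sum.swap[of _ L K])
      then show ?thesis using Ap by (simp add: g_def sum_divide_distrib[symmetric] field_simps)
    qed
    have "y j powr p \<le> (\<Sum>k\<in>K. N k) powr (p - 1) * (\<Sum>k\<in>{k\<in>K. 0 < N k}. g j k powr p * N k powr (1 - p))"
      unfolding yj by (rule L1[OF finK p]) (use N0 g0 j gz in auto)
    then have "y j powr p * A j \<le> Lam powr (p - 1) * (\<Sum>k\<in>Kp. g j k powr p * N k powr (1 - p)) * A j"
      using Ap by (simp add: Lam_def Kp_def)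
    also have "\<dots> = Lam powr (p - 1) * (\<Sum>k\<in>Kp. N k powr (1 - p) * (g j k powr p * A j))"
      by (simp add: sum_distrib_right sum_distrib_left mult_ac)
    also have "\<dots> \<le> B j" unfolding B_def
    proof (rule mult_left_mono[OF sum_mono])
      fix k assume k: "k \<in> Kp"
      have "N k powr (1 - p) * (g j k powr p * A j) \<le> N k powr (1 - p) * ((G k / V) powr (p - 1) * (\<Sum>l\<in>L. a l powr p * om j k l))"
        by (rule mult_left_mono) (use inner[OF j _ Ap] k in \<open>auto simp: Kp_def\<close>)
      then show "N k powr (1 - p) * (g j k powr p * A j) \<le> N k powr (1 - p) * (G k / V) powr (p - 1) * (\<Sum>l\<in>L. a l powr p * om j k l)"
        by (simp add: mult_ac)
    qed simp
    finally show ?thesis .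
  qed
  have "(\<Sum>j\<in>J. y j powr p * A j / V) \<le> (\<Sum>j\<in>J. B j / V)"
    by (rule sum_mono) (use perj V in \<open>simp add: divide_right_mono\<close>)
  also have "\<dots> = Lam powr (p - 1) * (\<Sum>k\<in>Kp. N k powr (1 - p) * (G k / V) powr (p - 1) *
                    (\<Sum>l\<in>L. a l powr p * (\<Sum>j\<in>J. om j k l)) / V)"
  proof -
    have swap: "(\<Sum>j\<in>J. \<Sum>k\<in>Kp. N k powr (1-p) * (G k/V) powr (p-1) * (\<Sum>l\<in>L. a l powr p * om j k l))
       = (\<Sum>k\<in>Kp. N k powr (1-p) * (G k/V) powr (p-1) * (\<Sum>l\<in>L. a l powr p * (\<Sum>j\<in>J. om j k l)))"
      apply (subst sum.swap) by (simp add: sum_distrib_left sum.swap[of _ J L])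
    have "(\<Sum>j\<in>J. B j / V) = Lam powr (p - 1) * (\<Sum>j\<in>J. \<Sum>k\<in>Kp. N k powr (1-p) * (G k/V) powr (p-1) * (\<Sum>l\<in>L. a l powr p * om j k l)) / V"
      unfolding B_def by (simp add: sum_divide_distrib[symmetric] sum_distrib_left)
    also have "\<dots> = Lam powr (p - 1) * (\<Sum>k\<in>Kp. N k powr (1-p) * (G k/V) powr (p-1) * (\<Sum>l\<in>L. a l powr p * (\<Sum>j\<in>J. om j k l))) / V"
      by (simp only: swap)
    finally show ?thesis by (simp add: sum_divide_distrib[symmetric])
  qed
  also have "\<dots> = Lam powr (p - 1) * (\<Sum>k\<in>Kp. N k)"
  proof -
    have "N k powr (1 - p) * (G k / V) powr (p - 1) * (\<Sum>l\<in>L. a l powr p * (\<Sum>j\<in>J. om j k l)) / V = N k"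
      if k: "k \<in> Kp" for k
    proof -
      have kK: "k \<in> K" and Np: "0 < N k" using k by (auto simp: Kp_def)
      have Gp: "0 < G k" using Np N_def V G0[OF kK] by (auto simp: less_le)
      have wp: "0 < w k" using Np N_def V w0[OF kK] by (auto simp: less_le)
      have e1: "(\<Sum>l\<in>L. a l powr p * (\<Sum>j\<in>J. om j k l)) = w k * G k"
        using hw[OF kK] Gp by (simp add: G_def)
      have "N k powr (1 - p) = w k powr ((1 - p) / p) * (G k / V) powr (1 - p)"
      proof -
        have "N k = w k powr (1 / p) * (G k / V)" by (simp add: N_def)
        then have "N k powr (1 - p) = (w k powr (1 / p) * (G k / V)) powr (1 - p)" by simp
        also have "\<dots> = (w k powr (1 / p)) powr (1 - p) * (G k / V) powr (1 - p)"
          by (rule powr_mult; use wp Gp V in simp)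
        finally have "N k powr (1 - p) = (w k powr (1 / p)) powr (1 - p) * (G k / V) powr (1 - p)" .
        then show ?thesis by (simp add: powr_powr)
      qed
      then have "N k powr (1 - p) * (G k / V) powr (p - 1) = w k powr ((1 - p) / p)"
        using Gp V by (simp add: mult.assoc powr_add[symmetric])
      then have "N k powr (1 - p) * (G k / V) powr (p - 1) * (\<Sum>l\<in>L. a l powr p * (\<Sum>j\<in>J. om j k l)) / V
          = w k powr ((1 - p) / p) * w k powr 1 * G k / V"
        using e1 wp by simp
      also have "\<dots> = w k powr (1 / p) * G k / V"
      proof -
        have "(1 - p) / p + 1 = 1 / p" using p0 by (simp add: field_simps)
        then have "w k powr ((1 - p) / p) * w k powr 1 = w k powr (1 / p)"
          by (simp only: powr_add[symmetric])
        then show ?thesis by simp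
      qed
      finally show ?thesis by (simp add: N_def)
    qed
    then show ?thesis by simp
  qed
  also have "(\<Sum>k\<in>Kp. N k) = Lam"
    unfolding Lam_def Kp_def by (rule sum.mono_neutral_left) (use finK N0 in \<open>auto simp: less_le\<close>)
  also have "Lam powr (p - 1) * Lam = Lam powr p"
  proof (cases "Lam = 0")
    case False
    then have "Lam powr (p - 1) * Lam powr 1 = Lam powr p" by (simp only: powr_add[symmetric]) simp
    then show ?thesis using Lam0 False by simp
  qed simp
  finally have le: "(\<Sum>j\<in>J. y j powr p * A j / V) \<le> Lam powr p" .
  have "(\<Sum>j\<in>J. y j powr p * A j / V) powr (1 / p) \<le> (Lam powr p) powr (1 / p)"
    by (rule powr_mono2) (use le p0 A0 V in \<open>auto intro!: sum_nonneg\<close>)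
  also have "\<dots> = Lam" using Lam0 p0 by (simp add: powr_powr)
  finally show ?thesis by (simp add: Lam_def N_def A_def G_def)
qed

lemma ftsD:
  assumes "faithful_tracial_state tr S"
  shows "\<And>x y. x \<in> S \<Longrightarrow> y \<in> S \<Longrightarrow> tr (x + y) = tr x + tr y"
    "\<And>c x. x \<in> S \<Longrightarrow> tr (cscale c x) = c * tr x"
    "\<And>x y. x \<in> S \<Longrightarrow> y \<in> S \<Longrightarrow> tr (x ** y) = tr (y ** x)"
    "\<And>x. x \<in> S \<Longrightarrow> Im (tr (adj x ** x)) = 0"
    "\<And>x. x \<in> S \<Longrightarrow> Re (tr (adj x ** x)) \<ge> 0"
    "\<And>x. x \<in> S \<Longrightarrow> tr (adj x ** x) = 0 \<Longrightarrow> x = 0"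
  using assms unfolding faithful_tracial_state_def by blast+

lemma tr_zero:
  assumes usa: "unital_star_subalg S" and fts: "faithful_tracial_state tr S"
  shows "tr 0 = 0"
proof -
  have "tr (0 + 0) = tr 0 + tr 0" by (rule ftsD(1)[OF fts usaD(2)[OF usa] usaD(2)[OF usa]])
  then show ?thesis by simp
qed

lemma tr_sum:
  assumes usa: "unital_star_subalg S" and fts: "faithful_tracial_state tr S"
    and F: "\<And>i. i \<in> I \<Longrightarrow> F i \<in> S" and fin: "finite I"
  shows "tr (sum F I) = (\<Sum>i\<in>I. tr (F i))"
  using fin F
proof (induction I rule: finite_induct)
  case empty then show ?case using tr_zero[OF usa fts] by simp
next
  case (insert x I)
  have "sum F I \<in> S" using insert.prems by (intro usa_sum[OF usa]) auto
  then have "tr (F x + sum F I) = tr (F x) + tr (sum F I)"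
    using insert.prems by (intro ftsD(1)[OF fts]) auto
  then show ?case using insert by simp
qed

lemma tr_proj:
  assumes fts: "faithful_tracial_state tr S" and PS: "P \<in> S" and Pp: "is_proj P"
  shows "Im (tr P) = 0" "Re (tr P) \<ge> 0" "P \<noteq> 0 \<Longrightarrow> Re (tr P) > 0"
proof -
  have e: "adj P ** P = P" using Pp by (simp add: is_proj_def)
  show "Im (tr P) = 0" using ftsD(4)[OF fts PS] e by simp
  show "Re (tr P) \<ge> 0" using ftsD(5)[OF fts PS] e by simp
  assume "P \<noteq> 0"
  then have "tr P \<noteq> 0" using ftsD(6)[OF fts PS] e by auto
  then have "Re (tr P) \<noteq> 0" using \<open>Im (tr P) = 0\<close> by (simp add: complex_eq_iff)
  then show "Re (tr P) > 0" using ftsD(5)[OF fts PS] e by simp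
qed

lemma proj_prod:
  assumes "is_proj a" "is_proj b" "a ** b = b ** a"
  shows "is_proj (a ** b)"
proof -
  have "a ** b ** (a ** b) = a ** (b ** a) ** b" by (simp add: mm_assoc)
  also have "\<dots> = (a ** a) ** (b ** b)" by (simp add: assms(3)[symmetric] mm_assoc)
  finally show ?thesis using assms by (simp add: is_proj_def adj_mult)
qed

lemma tracial_tr:
  assumes fts: "faithful_tracial_state tr S" and sub: "B \<subseteq> S"
  shows "tracial B tr"
  unfolding tracial_def
proof (intro ballI conjI)
  fix x y assume x: "x \<in> B" and y: "y \<in> B"
  then have xS: "x \<in> S" and yS: "y \<in> S" using sub by auto
  show "tr (x + y) = tr x + tr y" by (rule ftsD(1)[OF fts xS yS])
  show "tr (x ** y) = tr (y ** x)" by (rule ftsD(3)[OF fts xS yS])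
qed

lemma tracial_mtrace: "tracial B mtrace"
  unfolding tracial_def
proof (intro ballI conjI)
  fix x y :: "'n::finite cmat"
  show "mtrace (x + y) = mtrace x + mtrace y" by (rule mtrace_add)
  show "mtrace (x ** y) = mtrace (y ** x)" by (rule mtrace_comm)
qed

lemma rank_ratio:
  fixes A :: "'n::finite cmat set"
  assumes usa: "unital_star_subalg A" and sub: "A \<subseteq> A11" and fts: "faithful_tracial_state tr A11"
    and w: "w \<in> summands A" and PS: "P \<in> A" and Pp: "is_proj P" and Pw: "P ** w = P"
  shows "Re (mtrace P) / Re (mtrace (minproj_in A w)) * Re (tr (minproj_in A w)) = Re (tr P)"
proof -
  define g where "g = minproj_in A w"
  have g: "g \<in> min_projs A" "g ** w = g" using minproj_in[OF w] by (auto simp: g_def)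
  obtain n :: nat where n: "\<forall>\<phi>. tracial A \<phi> \<longrightarrow> \<phi> P = of_nat n * \<phi> g"
    using factA[OF usa w g PS Pp Pw] by blast
  have "tr P = of_nat n * tr g" using n tracial_tr[OF fts sub] by blast
  moreover have "mtrace P = of_nat n * mtrace g" using n tracial_mtrace by blast
  moreover obtain b where b: "b > 0" "mtrace g = complex_of_real b"
    using mtrace_proj_pos[OF min_projsD(2)[OF g(1)] min_projsD(3)[OF g(1)]] by blast
  ultimately have "Re (mtrace P) / Re (mtrace g) * Re (tr g) = Re (tr P)"
    by (simp add: field_simps)
  then show ?thesis unfolding g_def .
qed

lemma ceD:
  assumes "tr_cond_exp tr S B E"
  shows "\<And>x. x \<in> S \<Longrightarrow> E x \<in> B"
    "\<And>b. b \<in> B \<Longrightarrow> E b = b"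
    "\<And>b1 b2 x. b1 \<in> B \<Longrightarrow> b2 \<in> B \<Longrightarrow> x \<in> S \<Longrightarrow> E (b1 ** x ** b2) = b1 ** E x ** b2"
    "\<And>x. x \<in> S \<Longrightarrow> tr (E x) = tr x"
  using assms unfolding tr_cond_exp_def by blast+

lemma ce_right:
  assumes ce: "tr_cond_exp tr S B E" and usaB: "unital_star_subalg B" and x: "x \<in> S" and b: "b \<in> B"
  shows "E (x ** b) = E x ** b"
  using ceD(3)[OF ce usaD(1)[OF usaB] b x] by simp

lemma ce_left:
  assumes ce: "tr_cond_exp tr S B E" and usaB: "unital_star_subalg B" and x: "x \<in> S" and b: "b \<in> B"
  shows "E (b ** x) = b ** E x"
  using ceD(3)[OF ce b usaD(1)[OF usaB] x] by simp

lemma tr_ce: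
  assumes ce: "tr_cond_exp tr S B E" and usaB: "unital_star_subalg B" and usaS: "unital_star_subalg S"
    and sub: "B \<subseteq> S" and x: "x \<in> S" and b: "b \<in> B"
  shows "tr (x ** b) = tr (E x ** b)"
proof -
  have "x ** b \<in> S" using usaD(4)[OF usaS x] sub b by blast
  then have "tr (x ** b) = tr (E (x ** b))" using ceD(4)[OF ce] by simp
  also have "\<dots> = tr (E x ** b)" using ce_right[OF ce usaB x b] by simp
  finally show ?thesis .
qed

lemma ce_central:
  assumes ce: "tr_cond_exp tr S B E" and usaB: "unital_star_subalg B"
    and sub: "B \<subseteq> S" and x: "x \<in> S" and xc: "\<And>b. b \<in> B \<Longrightarrow> x ** b = b ** x"
  shows "central_in B (E x)"
  unfolding central_in_def
proof
  fix b assume b: "b \<in> B"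
  have "E x ** b = E (x ** b)" using ce_right[OF ce usaB x b] by simp
  also have "\<dots> = E (b ** x)" using xc[OF b] by simp
  also have "\<dots> = b ** E x" using ce_left[OF ce usaB x b] .
  finally show "E x ** b = b ** E x" .
qed

lemma T7gen:
  fixes B :: "'n::finite cmat set"
  assumes usa11: "unital_star_subalg A11" and usaB: "unital_star_subalg B" and sub: "B \<subseteq> A11"
    and fts: "faithful_tracial_state tr A11" and ce: "tr_cond_exp tr A11 B E"
    and w: "w \<in> summands B" and l: "l \<in> summands A11" and eB: "e \<in> B"
  shows "tr (minproj_in B w ** l) * tr (e ** w) = tr (minproj_in B w) * tr (e ** w ** l)"
proof -
  define f where "f = minproj_in B w"
  have f: "f \<in> min_projs B" "f ** w = f" using minproj_in[OF w] by (auto simp: f_def)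
  have fB: "f \<in> B" and fp: "is_proj f" using min_projsD[OF f(1)] by auto
  have ff: "f ** f = f" using fp by (simp add: is_proj_def)
  have wB: "w \<in> B" using summandsD(1)[OF w] .
  have lS: "l \<in> A11" using summandsD(1)[OF l] .
  have lc: "\<And>s. s \<in> A11 \<Longrightarrow> l ** s = s ** l" using summandsD(4)[OF l] .
  define Y where "Y = E l"
  have YB: "Y \<in> B" unfolding Y_def by (rule ceD(1)[OF ce lS])
  have Yc: "central_in B Y" unfolding Y_def
    by (rule ce_central[OF ce usaB sub lS]) (use lc sub in blast)
  have YcD: "\<And>b. b \<in> B \<Longrightarrow> Y ** b = b ** Y" using Yc unfolding central_in_def by blast
  obtain c where c: "f ** Y ** f = cscale c f" using compress[OF usaB f(1) YB] by blast
  have Yf: "Y ** f = cscale c f"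
  proof -
    have "Y ** f = Y ** (f ** f)" using ff by simp
    also have "\<dots> = (Y ** f) ** f" by (simp add: mm_assoc)
    also have "\<dots> = f ** Y ** f" using YcD[OF fB] by simp
    finally show ?thesis using c by simp
  qed
  have Yw: "Y ** w = cscale c w" by (rule central_scalar[OF usaB YB Yc w f(1) f(2) Yf])
  have fS: "f \<in> A11" using fB sub by blast
  have eS: "e \<in> A11" using eB sub by blast
  have ewB: "e ** w \<in> B" by (rule usaD(4)[OF usaB eB wB])
  have ewS: "e ** w \<in> A11" using ewB sub by blast
  have t1: "tr (f ** l) = c * tr f"
  proof -
    have "tr (f ** l) = tr (l ** f)" by (rule ftsD(3)[OF fts fS lS])
    also have "\<dots> = tr (Y ** f)" unfolding Y_def by (rule tr_ce[OF ce usaB usa11 sub lS fB])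
    also have "\<dots> = c * tr f" using Yf ftsD(2)[OF fts fS] by simp
    finally show ?thesis .
  qed
  have t2: "tr (e ** w ** l) = c * tr (e ** w)"
  proof -
    have "tr (e ** w ** l) = tr (l ** (e ** w))" by (rule ftsD(3)[OF fts ewS lS])
    also have "\<dots> = tr (Y ** (e ** w))" unfolding Y_def by (rule tr_ce[OF ce usaB usa11 sub lS ewB])
    also have "Y ** (e ** w) = cscale c (e ** w)"
    proof -
      have "Y ** (e ** w) = (Y ** e) ** w" by (simp add: mm_assoc)
      also have "\<dots> = e ** (Y ** w)" using YcD[OF eB] by (simp add: mm_assoc)
      also have "\<dots> = cscale c (e ** w)" using Yw by simp
      finally show ?thesis .
    qed
    also have "tr (cscale c (e ** w)) = c * tr (e ** w)" by (rule ftsD(2)[OF fts ewS])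
    finally show ?thesis .
  qed
  show ?thesis unfolding f_def[symmetric] t1 t2 by (simp add: mult_ac)
qed

lemma HJK:
  fixes A00 :: "'n::finite cmat set"
  assumes usa00: "unital_star_subalg A00" and usa01: "unital_star_subalg A01"
    and usa10: "unital_star_subalg A10" and usa11: "unital_star_subalg A11"
    and incl: "A00 \<subseteq> A01" "A01 \<subseteq> A11" "A00 \<subseteq> A10" "A10 \<subseteq> A11"
    and fts: "faithful_tracial_state tr A11"
    and ce00: "tr_cond_exp tr A11 A00 E00" and ce01: "tr_cond_exp tr A11 A01 E01" and ce10: "tr_cond_exp tr A11 A10 E10"
    and comm_sq: "\<forall>x\<in>A11. E01 (E10 x) = E00 x"
    and e: "e \<in> min_projs A00" and j: "j \<in> summands A10" and k: "k \<in> summands A01"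
  shows "tr (e ** j ** k) * tr e = tr (e ** j) * tr (e ** k)"
proof -
  have e00: "e \<in> A00" using min_projsD(1)[OF e] .
  have e01: "e \<in> A01" and e10: "e \<in> A10" and e11: "e \<in> A11" using e00 incl by auto
  have ep: "e ** e = e" using min_projsD(2)[OF e] by (simp add: is_proj_def)
  have j10: "j \<in> A10" using summandsD(1)[OF j] .
  have j11: "j \<in> A11" using j10 incl by auto
  have jc: "\<And>b. b \<in> A10 \<Longrightarrow> j ** b = b ** j" using summandsD(4)[OF j] .
  have k01: "k \<in> A01" using summandsD(1)[OF k] .
  have k11: "k \<in> A11" using k01 incl by auto
  have kc: "\<And>b. b \<in> A01 \<Longrightarrow> k ** b = b ** k" using summandsD(4)[OF k] .
  have sub00: "A00 \<subseteq> A11" using incl by auto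
  define Z where "Z = E00 j"
  have Z00: "Z \<in> A00" unfolding Z_def by (rule ceD(1)[OF ce00 j11])
  have Zc: "central_in A00 Z" unfolding Z_def
    by (rule ce_central[OF ce00 usa00 sub00 j11]) (use jc incl in blast)
  have ZcD: "\<And>b. b \<in> A00 \<Longrightarrow> Z ** b = b ** Z" using Zc unfolding central_in_def by blast
  obtain al where al: "e ** Z ** e = cscale al e" using compress[OF usa00 e Z00] by blast
  have Ze: "Z ** e = cscale al e"
  proof -
    have "Z ** e = Z ** (e ** e)" using ep by simp
    also have "\<dots> = (Z ** e) ** e" by (simp add: mm_assoc)
    also have "\<dots> = e ** Z ** e" using ZcD[OF e00] by simp
    finally show ?thesis using al by simp
  qed
  have E01j: "E01 j = Z"
  proof -
    have "E10 j = j" by (rule ceD(2)[OF ce10 j10])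
    moreover have "E01 (E10 j) = E00 j" using comm_sq j11 by blast
    ultimately show ?thesis by (simp add: Z_def)
  qed
  have ke01: "k ** e \<in> A01" by (rule usaD(4)[OF usa01 k01 e01])
  have ek11: "e ** k \<in> A11" using usaD(4)[OF usa01 e01 k01] incl by auto
  have jk11: "j ** k \<in> A11" by (rule usaD(4)[OF usa11 j11 k11])
  have t1: "tr (e ** j ** k) = al * tr (e ** k)"
  proof -
    have "tr (e ** j ** k) = tr (e ** (j ** k))" by (simp add: mm_assoc)
    also have "\<dots> = tr ((j ** k) ** e)" by (rule ftsD(3)[OF fts e11 jk11])
    also have "\<dots> = tr (j ** (k ** e))" by (simp add: mm_assoc)
    also have "\<dots> = tr (E01 j ** (k ** e))" using incl by (intro tr_ce[OF ce01 usa01 usa11 _ j11 ke01]) auto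
    also have "E01 j ** (k ** e) = cscale al (e ** k)"
    proof -
      have "E01 j ** (k ** e) = Z ** (e ** k)" using E01j kc[OF e01] by simp
      also have "\<dots> = (Z ** e) ** k" by (simp add: mm_assoc)
      finally show ?thesis using Ze by simp
    qed
    also have "tr (cscale al (e ** k)) = al * tr (e ** k)" by (rule ftsD(2)[OF fts ek11])
    finally show ?thesis .
  qed
  have t2: "tr (e ** j) = al * tr e"
  proof -
    have "tr (e ** j) = tr (j ** e)" by (rule ftsD(3)[OF fts e11 j11])
    also have "\<dots> = tr (E00 j ** e)" by (rule tr_ce[OF ce00 usa00 usa11 sub00 j11 e00])
    also have "\<dots> = al * tr e" using Ze ftsD(2)[OF fts e11] by (simp add: Z_def)
    finally show ?thesis .
  qed
  show ?thesis unfolding t1 t2 by (simp add: mult_ac)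
qed

lemma omega_tr:
  fixes A00 :: "'n::finite cmat set"
  assumes usa11: "unital_star_subalg A11"
    and incl: "A00 \<subseteq> A01" "A01 \<subseteq> A11" "A00 \<subseteq> A10" "A10 \<subseteq> A11"
    and fts: "faithful_tracial_state tr A11"
    and e00: "e \<in> A00" and ep: "is_proj e" and j: "j \<in> summands A10" and k: "k \<in> summands A01"
    and l: "l \<in> summands A11"
  shows "Im (tr (e ** j ** k ** l)) = 0" "Re (tr (e ** j ** k ** l)) \<ge> 0"
proof -
  have e01: "e \<in> A01" and e10: "e \<in> A10" and e11: "e \<in> A11" using e00 incl by auto
  have j10: "j \<in> A10" and jp: "is_proj j" using summandsD[OF j] by auto
  have j11: "j \<in> A11" using j10 incl by auto
  have k01: "k \<in> A01" and kp: "is_proj k" using summandsD[OF k] by auto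
  have k11: "k \<in> A11" using k01 incl by auto
  have l11: "l \<in> A11" and lp: "is_proj l" using summandsD[OF l] by auto
  have lc: "\<And>s. s \<in> A11 \<Longrightarrow> l ** s = s ** l" using summandsD(4)[OF l] .
  have ej: "e ** j = j ** e" using summandsD(4)[OF j e10] by simp
  have ek: "e ** k = k ** e" using summandsD(4)[OF k e01] by simp
  have ee: "e ** e = e" using ep by (simp add: is_proj_def)
  have ll: "l ** l = l" using lp by (simp add: is_proj_def)
  define P where "P = e ** j ** l"
  define Q where "Q = e ** k ** l"
  have ej11: "e ** j \<in> A11" by (rule usaD(4)[OF usa11 e11 j11])
  have ek11: "e ** k \<in> A11" by (rule usaD(4)[OF usa11 e11 k11])
  have P11: "P \<in> A11" unfolding P_def by (rule usaD(4)[OF usa11 ej11 l11])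
  have Q11: "Q \<in> A11" unfolding Q_def by (rule usaD(4)[OF usa11 ek11 l11])
  have Pp: "is_proj P" unfolding P_def
    by (rule proj_prod[OF proj_prod[OF ep jp ej] lp]) (use lc[OF ej11] in simp)
  have Qp: "is_proj Q" unfolding Q_def
    by (rule proj_prod[OF proj_prod[OF ep kp ek] lp]) (use lc[OF ek11] in simp)
  have PQ: "P ** Q = e ** j ** k ** l"
  proof -
    have "P ** Q = e ** j ** (l ** (e ** k)) ** l" by (simp add: P_def Q_def mm_assoc)
    also have "\<dots> = e ** j ** (e ** k) ** (l ** l)" using lc[OF ek11] by (simp add: mm_assoc)
    also have "\<dots> = (e ** (j ** e)) ** k ** l" using ll by (simp add: mm_assoc)
    also have "e ** (j ** e) = e ** j"
    proof -
      have "e ** (j ** e) = e ** (e ** j)" using ej by simp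
      also have "\<dots> = e ** j" using ee by (simp add: mm_assoc[symmetric])
      finally show ?thesis .
    qed
    finally show ?thesis .
  qed
  have PP: "P ** P = P" "adj P = P" and QQ: "Q ** Q = Q" "adj Q = Q" using Pp Qp by (auto simp: is_proj_def)
  define X where "X = Q ** P"
  have X11: "X \<in> A11" unfolding X_def by (rule usaD(4)[OF usa11 Q11 P11])
  have QQ': "Q ** (Q ** W) = Q ** W" for W :: "'n cmat" using QQ by (simp add: mm_assoc[symmetric])
  have "adj X ** X = P ** Q ** P" unfolding X_def using PP QQ QQ' by (simp add: adj_mult mm_assoc)
  then have "tr (adj X ** X) = tr ((P ** Q) ** P)" by simp
  also have "\<dots> = tr (P ** (P ** Q))" by (rule ftsD(3)[OF fts usaD(4)[OF usa11 P11 Q11] P11])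
  also have "\<dots> = tr (P ** Q)" using PP by (simp add: mm_assoc[symmetric])
  finally have e: "tr (e ** j ** k ** l) = tr (adj X ** X)" using PQ by simp
  show "Im (tr (e ** j ** k ** l)) = 0" using ftsD(4)[OF fts X11] e by simp
  show "Re (tr (e ** j ** k ** l)) \<ge> 0" using ftsD(5)[OF fts X11] e by simp
qed

lemma sum_collapse:
  fixes A :: "'n::finite cmat set"
  assumes usaA: "unital_star_subalg A" and usa11: "unital_star_subalg A11" and sub: "A \<subseteq> A11"
    and fts: "faithful_tracial_state tr A11" and X: "X \<in> A11" and Y: "Y \<in> A11"
  shows "(\<Sum>k\<in>summands A. tr (X ** k ** Y)) = tr (X ** Y)"
proof -
  have fin: "finite (summands A)" by (rule summands_finite[OF usaA])
  have mem: "X ** k ** Y \<in> A11" if "k \<in> summands A" for k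
  proof -
    have "k \<in> A11" using summandsD(1)[OF that] sub by blast
    then show ?thesis using usaD(4)[OF usa11] X Y by blast
  qed
  have "(\<Sum>k\<in>summands A. tr (X ** k ** Y)) = tr (\<Sum>k\<in>summands A. X ** k ** Y)"
    by (rule tr_sum[OF usa11 fts mem fin, symmetric])
  also have "(\<Sum>k\<in>summands A. X ** k ** Y) = X ** (\<Sum>k\<in>summands A. k) ** Y"
    by (simp add: mm_sum_left mm_sum_right)
  also have "\<dots> = X ** Y" by (simp add: summands_sum[OF usaA])
  finally show ?thesis .
qed

theorem theoremB:
  fixes A00 A01 A10 A11 :: "'n::finite cmat set"
    and tr :: "'n cmat \<Rightarrow> complex"
    and E00 E01 E10 :: "'n cmat \<Rightarrow> 'n cmat"
    and p :: real
    and a :: "'n cmat \<Rightarrow> real"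
    and i :: "'n cmat"
  assumes alg: "unital_star_subalg A00" "unital_star_subalg A01"
               "unital_star_subalg A10" "unital_star_subalg A11"
    and incl: "A00 \<subseteq> A01" "A01 \<subseteq> A11" "A00 \<subseteq> A10" "A10 \<subseteq> A11"
    and tr: "faithful_tracial_state tr A11"
    and E: "tr_cond_exp tr A11 A00 E00" "tr_cond_exp tr A11 A01 E01" "tr_cond_exp tr A11 A10 E10"
    and comm_sq: "\<forall>x\<in>A11. E01 (E10 x) = E00 x"
    and p: "1 \<le> p"
    and a: "\<forall>l\<in>summands A11. 0 \<le> a l"
    and i: "i \<in> summands A00"
  shows "(\<Sum>j\<in>summands A10.
            (\<Sum>l\<in>summands A11. incl_mat A10 A11 j l * a l * trace_vec tr A11 l
                                   / trace_vec tr A10 j) powr p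
            * incl_mat A00 A10 i j * trace_vec tr A10 j / trace_vec tr A00 i) powr (1 / p)
         \<le> (\<Sum>k\<in>summands A01.
            (\<Sum>l\<in>summands A11. incl_mat A01 A11 k l * a l powr p * trace_vec tr A11 l
                                   / trace_vec tr A01 k) powr (1 / p)
            * incl_mat A00 A01 i k * trace_vec tr A01 k / trace_vec tr A00 i)"
proof -
  define J where "J = summands A10"
  define K where "K = summands A01"
  define L where "L = summands A11"
  define e where "e = minproj_in A00 i"
  have usa00: "unital_star_subalg A00" and usa01: "unital_star_subalg A01"
    and usa10: "unital_star_subalg A10" and usa11: "unital_star_subalg A11" using alg by auto
  have sub00: "A00 \<subseteq> A11" and sub01: "A01 \<subseteq> A11" and sub10: "A10 \<subseteq> A11" using incl by auto
  have eM: "e \<in> min_projs A00" and ei: "e ** i = e" using minproj_in[OF i] by (auto simp: e_def)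
  have e00: "e \<in> A00" and ep: "is_proj e" and enz: "e \<noteq> 0" using min_projsD[OF eM] by auto
  have e01: "e \<in> A01" and e10: "e \<in> A10" and e11: "e \<in> A11" using e00 incl by auto
  have finJ: "finite J" unfolding J_def by (rule summands_finite[OF usa10])
  have finK: "finite K" unfolding K_def by (rule summands_finite[OF usa01])
  have finL: "finite L" unfolding L_def by (rule summands_finite[OF usa11])
  have jD: "j \<in> A10" "j \<in> A11" "is_proj j" "\<And>b. b \<in> A10 \<Longrightarrow> j ** b = b ** j" if "j \<in> J" for j
    using summandsD[of j A10] that sub10 by (auto simp: J_def)
  have kD: "k \<in> A01" "k \<in> A11" "is_proj k" "\<And>b. b \<in> A01 \<Longrightarrow> k ** b = b ** k" if "k \<in> K" for k
    using summandsD[of k A01] that sub01 by (auto simp: K_def)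
  have lD: "l \<in> A11" "is_proj l" "\<And>b. b \<in> A11 \<Longrightarrow> l ** b = b ** l" if "l \<in> L" for l
    using summandsD[of l A11] that by (auto simp: L_def)
  define om where "om j k l = Re (tr (e ** j ** k ** l))" for j k l :: "'n cmat"
  define V where "V = Re (tr e)"
  have V: "0 < V" unfolding V_def by (rule tr_proj(3)[OF tr e11 ep enz])
  have tv00: "trace_vec tr A00 i = V" by (simp add: trace_vec_def V_def e_def)
  have sK: "(\<Sum>k\<in>K. om j k l) = Re (tr (e ** j ** l))" if j: "j \<in> J" and l: "l \<in> L" for j l
  proof -
    have "(\<Sum>k\<in>K. tr (e ** j ** k ** l)) = tr (e ** j ** l)" unfolding K_def
      by (rule sum_collapse[OF usa01 usa11 sub01 tr usaD(4)[OF usa11 e11 jD(2)[OF j]] lD(1)[OF l]])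
    then show ?thesis by (simp add: om_def Re_sum[symmetric])
  qed
  have sL: "(\<Sum>l\<in>L. om j k l) = Re (tr (e ** j ** k))" if j: "j \<in> J" and k: "k \<in> K" for j k
  proof -
    have "(\<Sum>l\<in>L. tr (e ** j ** k ** l ** mat 1)) = tr (e ** j ** k ** mat 1)" unfolding L_def
      by (rule sum_collapse[OF usa11 usa11 subset_refl tr usaD(4)[OF usa11 usaD(4)[OF usa11 e11 jD(2)[OF j]] kD(2)[OF k]] usaD(1)[OF usa11]])
    then show ?thesis by (simp add: om_def Re_sum[symmetric])
  qed
  have sJ: "(\<Sum>j\<in>J. om j k l) = Re (tr (e ** k ** l))" if k: "k \<in> K" and l: "l \<in> L" for k l
  proof -
    have "(\<Sum>j\<in>J. tr (e ** j ** (k ** l))) = tr (e ** (k ** l))" unfolding J_def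
      by (rule sum_collapse[OF usa10 usa11 sub10 tr e11 usaD(4)[OF usa11 kD(2)[OF k] lD(1)[OF l]]])
    then show ?thesis by (simp add: om_def Re_sum[symmetric] mm_assoc)
  qed
  have imL: "Im (tr (e ** j ** k)) = 0" if j: "j \<in> J" and k: "k \<in> K" for j k
  proof -
    have "(\<Sum>l\<in>L. tr (e ** j ** k ** l ** mat 1)) = tr (e ** j ** k ** mat 1)" unfolding L_def
      by (rule sum_collapse[OF usa11 usa11 subset_refl tr usaD(4)[OF usa11 usaD(4)[OF usa11 e11 jD(2)[OF j]] kD(2)[OF k]] usaD(1)[OF usa11]])
    moreover have "Im (tr (e ** j ** k ** l)) = 0" if "l \<in> L" for l
      using omega_tr(1)[OF usa11 incl tr e00 ep] j k that by (simp add: J_def K_def L_def)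
    ultimately have eq: "tr (e ** j ** k) = (\<Sum>l\<in>L. tr (e ** j ** k ** l))" by simp
    have "Im (tr (e ** j ** k)) = Im (\<Sum>l\<in>L. tr (e ** j ** k ** l))" by (simp only: eq)
    also have "\<dots> = (\<Sum>l\<in>L. Im (tr (e ** j ** k ** l)))" by (rule Im_sum)
    also have "\<dots> = 0" using \<open>\<And>l. l \<in> L \<Longrightarrow> Im (tr (e ** j ** k ** l)) = 0\<close> by simp
    finally show ?thesis .
  qed
  have AJ: "(\<Sum>k\<in>K. \<Sum>l\<in>L. om j k l) = Re (tr (e ** j))" if j: "j \<in> J" for j
  proof -
    have "(\<Sum>k\<in>K. tr (e ** j ** k ** mat 1)) = tr (e ** j ** mat 1)" unfolding K_def
      by (rule sum_collapse[OF usa01 usa11 sub01 tr usaD(4)[OF usa11 e11 jD(2)[OF j]] usaD(1)[OF usa11]])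
    then show ?thesis using sL[OF j] by (simp add: Re_sum[symmetric])
  qed
  have GK: "(\<Sum>j\<in>J. \<Sum>l\<in>L. om j k l) = Re (tr (e ** k))" if k: "k \<in> K" for k
  proof -
    have "(\<Sum>j\<in>J. tr (e ** j ** k)) = tr (e ** k)" unfolding J_def
      by (rule sum_collapse[OF usa10 usa11 sub10 tr e11 kD(2)[OF k]])
    then show ?thesis using sL[OF _ k] by (simp add: Re_sum[symmetric])
  qed
  have om0: "0 \<le> om j k l" if "j \<in> J" "k \<in> K" "l \<in> L" for j k l
    using omega_tr(2)[OF usa11 incl tr e00 ep] that by (simp add: om_def J_def K_def L_def)
  have ejp: "is_proj (e ** j)" "e ** j \<in> A10" "e ** j \<in> A11" if j: "j \<in> J" for j
  proof -
    show "is_proj (e ** j)" by (rule proj_prod[OF ep jD(3)[OF j]]) (use jD(4)[OF j e10] in simp)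
    show "e ** j \<in> A10" by (rule usaD(4)[OF usa10 e10 jD(1)[OF j]])
    then show "e ** j \<in> A11" using sub10 by blast
  qed
  have ekp: "is_proj (e ** k)" "e ** k \<in> A01" "e ** k \<in> A11" if k: "k \<in> K" for k
  proof -
    show "is_proj (e ** k)" by (rule proj_prod[OF ep kD(3)[OF k]]) (use kD(4)[OF k e01] in simp)
    show "e ** k \<in> A01" by (rule usaD(4)[OF usa01 e01 kD(1)[OF k]])
    then show "e ** k \<in> A11" using sub01 by blast
  qed
  have hjk: "(\<Sum>l\<in>L. om j k l) * V = (\<Sum>k'\<in>K. \<Sum>l\<in>L. om j k' l) * (\<Sum>j'\<in>J. \<Sum>l\<in>L. om j' k l)"
    if j: "j \<in> J" and k: "k \<in> K" for j k
  proof -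
    have c: "tr (e ** j ** k) * tr e = tr (e ** j) * tr (e ** k)"
      using HJK[OF usa00 usa01 usa10 usa11 incl tr E comm_sq eM] j k by (simp add: J_def K_def)
    have i1: "Im (tr (e ** j ** k)) = 0" by (rule imL[OF j k])
    have i2: "Im (tr e) = 0" by (rule tr_proj(1)[OF tr e11 ep])
    have i3: "Im (tr (e ** j)) = 0" by (rule tr_proj(1)[OF tr ejp(3)[OF j] ejp(1)[OF j]])
    have i4: "Im (tr (e ** k)) = 0" by (rule tr_proj(1)[OF tr ekp(3)[OF k] ekp(1)[OF k]])
    have "Re (tr (e ** j ** k) * tr e) = Re (tr (e ** j) * tr (e ** k))" using c by simp
    then have "Re (tr (e ** j ** k)) * Re (tr e) = Re (tr (e ** j)) * Re (tr (e ** k))"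
      using i1 i2 i3 i4 by simp
    then show ?thesis using sL[OF j k] AJ[OF j] GK[OF k] by (simp add: V_def)
  qed
  define fj where "fj j = minproj_in A10 j" for j
  define y where "y j = (\<Sum>l\<in>L. incl_mat A10 A11 j l * a l * trace_vec tr A11 l / trace_vec tr A10 j)" for j
  have jterm: "0 \<le> y j \<and> y j * (\<Sum>k\<in>K. \<Sum>l\<in>L. om j k l) = (\<Sum>l\<in>L. a l * (\<Sum>k\<in>K. om j k l))
      \<and> incl_mat A00 A10 i j * trace_vec tr A10 j = (\<Sum>k\<in>K. \<Sum>l\<in>L. om j k l)" if j: "j \<in> J" for j
  proof -
    have jS: "j \<in> summands A10" using j by (simp add: J_def)
    have fM: "fj j \<in> min_projs A10" and fjj: "fj j ** j = fj j" using minproj_in[OF jS] by (auto simp: fj_def)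
    have f10: "fj j \<in> A10" and fp: "is_proj (fj j)" and fnz: "fj j \<noteq> 0" using min_projsD[OF fM] by auto
    have f11: "fj j \<in> A11" using f10 sub10 by blast
    have phi: "0 < Re (tr (fj j))" by (rule tr_proj(3)[OF tr f11 fp fnz])
    have tv10: "trace_vec tr A10 j = Re (tr (fj j))" by (simp add: trace_vec_def fj_def)
    have incl1: "incl_mat A10 A11 j l * trace_vec tr A11 l = Re (tr (fj j ** l))" if l: "l \<in> L" for l
    proof -
      have lS: "l \<in> summands A11" using l by (simp add: L_def)
      have P11: "fj j ** l \<in> A11" by (rule usaD(4)[OF usa11 f11 lD(1)[OF l]])
      have Pp: "is_proj (fj j ** l)" by (rule proj_prod[OF fp lD(2)[OF l]]) (use lD(3)[OF l f11] in simp)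
      have Pl: "fj j ** l ** l = fj j ** l" using lD(2)[OF l] by (simp add: mm_assoc is_proj_def)
      show ?thesis using rank_ratio[OF usa11 subset_refl tr lS P11 Pp Pl]
        by (simp add: incl_mat_def trace_vec_def fj_def)
    qed
    have incl2: "incl_mat A00 A10 i j * trace_vec tr A10 j = Re (tr (e ** j))"
    proof -
      have Pj: "e ** j ** j = e ** j" using jD(3)[OF j] by (simp add: mm_assoc is_proj_def)
      show ?thesis using rank_ratio[OF usa10 sub10 tr jS ejp(2)[OF j] ejp(1)[OF j] Pj]
        by (simp add: incl_mat_def trace_vec_def e_def)
    qed
    have t7: "Re (tr (fj j ** l)) * Re (tr (e ** j)) = Re (tr (fj j)) * Re (tr (e ** j ** l))" if l: "l \<in> L" for l
    proof -
      have lS: "l \<in> summands A11" using l by (simp add: L_def)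
      have c: "tr (fj j ** l) * tr (e ** j) = tr (fj j) * tr (e ** j ** l)"
        unfolding fj_def by (rule T7gen[OF usa11 usa10 sub10 tr E(3) jS lS e10])
      have P11: "fj j ** l \<in> A11" by (rule usaD(4)[OF usa11 f11 lD(1)[OF l]])
      have Pp: "is_proj (fj j ** l)" by (rule proj_prod[OF fp lD(2)[OF l]]) (use lD(3)[OF l f11] in simp)
      have Q11: "e ** j ** l \<in> A11" by (rule usaD(4)[OF usa11 ejp(3)[OF j] lD(1)[OF l]])
      have Qp: "is_proj (e ** j ** l)" by (rule proj_prod[OF ejp(1)[OF j] lD(2)[OF l]]) (use lD(3)[OF l ejp(3)[OF j]] in simp)
      have i1: "Im (tr (fj j ** l)) = 0" by (rule tr_proj(1)[OF tr P11 Pp])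
      have i2: "Im (tr (e ** j)) = 0" by (rule tr_proj(1)[OF tr ejp(3)[OF j] ejp(1)[OF j]])
      have i3: "Im (tr (fj j)) = 0" by (rule tr_proj(1)[OF tr f11 fp])
      have i4: "Im (tr (e ** j ** l)) = 0" by (rule tr_proj(1)[OF tr Q11 Qp])
      have "Re (tr (fj j ** l) * tr (e ** j)) = Re (tr (fj j) * tr (e ** j ** l))" using c by simp
      then show ?thesis using i1 i2 i3 i4 by simp
    qed
    have yj: "y j = (\<Sum>l\<in>L. a l * Re (tr (fj j ** l)) / Re (tr (fj j)))"
      unfolding y_def tv10[symmetric]
    proof (rule sum.cong[OF refl])
      fix l assume l: "l \<in> L"
      show "incl_mat A10 A11 j l * a l * trace_vec tr A11 l / trace_vec tr A10 j = a l * Re (tr (fj j ** l)) / trace_vec tr A10 j"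
        using incl1[OF l] by (simp add: mult_ac)
    qed
    have y0: "0 \<le> y j" unfolding yj
      using a phi tr_proj(2)[OF tr usaD(4)[OF usa11 f11 lD(1)] proj_prod[OF fp lD(2)]] lD(3)[OF _ f11]
      by (intro sum_nonneg divide_nonneg_nonneg mult_nonneg_nonneg) (auto simp: L_def)
    have "y j * Re (tr (e ** j)) = (\<Sum>l\<in>L. a l * Re (tr (e ** j ** l)))"
      unfolding yj sum_distrib_right
    proof (rule sum.cong[OF refl])
      fix l assume l: "l \<in> L"
      have "a l * Re (tr (fj j ** l)) / Re (tr (fj j)) * Re (tr (e ** j)) = a l * (Re (tr (fj j ** l)) * Re (tr (e ** j))) / Re (tr (fj j))"
        by simp
      also have "\<dots> = a l * Re (tr (e ** j ** l))" using t7[OF l] phi by simp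
      finally show "a l * Re (tr (fj j ** l)) / Re (tr (fj j)) * Re (tr (e ** j)) = a l * Re (tr (e ** j ** l))" .
    qed
    then have "y j * (\<Sum>k\<in>K. \<Sum>l\<in>L. om j k l) = (\<Sum>l\<in>L. a l * (\<Sum>k\<in>K. om j k l))"
      using AJ[OF j] sK[OF j] by simp
    then show ?thesis using y0 incl2 AJ[OF j] by simp
  qed
  define hk where "hk k = minproj_in A01 k" for k
  define w where "w k = (\<Sum>l\<in>L. incl_mat A01 A11 k l * a l powr p * trace_vec tr A11 l / trace_vec tr A01 k)" for k
  have kterm: "0 \<le> w k \<and> w k * (\<Sum>j\<in>J. \<Sum>l\<in>L. om j k l) = (\<Sum>l\<in>L. a l powr p * (\<Sum>j\<in>J. om j k l))
      \<and> incl_mat A00 A01 i k * trace_vec tr A01 k = (\<Sum>j\<in>J. \<Sum>l\<in>L. om j k l)" if k: "k \<in> K" for k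
  proof -
    have kS: "k \<in> summands A01" using k by (simp add: K_def)
    have fM: "hk k \<in> min_projs A01" and fkk: "hk k ** k = hk k" using minproj_in[OF kS] by (auto simp: hk_def)
    have f01: "hk k \<in> A01" and fp: "is_proj (hk k)" and fnz: "hk k \<noteq> 0" using min_projsD[OF fM] by auto
    have f11: "hk k \<in> A11" using f01 sub01 by blast
    have phi: "0 < Re (tr (hk k))" by (rule tr_proj(3)[OF tr f11 fp fnz])
    have tv01: "trace_vec tr A01 k = Re (tr (hk k))" by (simp add: trace_vec_def hk_def)
    have incl1: "incl_mat A01 A11 k l * trace_vec tr A11 l = Re (tr (hk k ** l))" if l: "l \<in> L" for l
    proof -
      have lS: "l \<in> summands A11" using l by (simp add: L_def)
      have P11: "hk k ** l \<in> A11" by (rule usaD(4)[OF usa11 f11 lD(1)[OF l]])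
      have Pp: "is_proj (hk k ** l)" by (rule proj_prod[OF fp lD(2)[OF l]]) (use lD(3)[OF l f11] in simp)
      have Pl: "hk k ** l ** l = hk k ** l" using lD(2)[OF l] by (simp add: mm_assoc is_proj_def)
      show ?thesis using rank_ratio[OF usa11 subset_refl tr lS P11 Pp Pl]
        by (simp add: incl_mat_def trace_vec_def hk_def)
    qed
    have incl2: "incl_mat A00 A01 i k * trace_vec tr A01 k = Re (tr (e ** k))"
    proof -
      have Pk: "e ** k ** k = e ** k" using kD(3)[OF k] by (simp add: mm_assoc is_proj_def)
      show ?thesis using rank_ratio[OF usa01 sub01 tr kS ekp(2)[OF k] ekp(1)[OF k] Pk]
        by (simp add: incl_mat_def trace_vec_def e_def)
    qed
    have t7: "Re (tr (hk k ** l)) * Re (tr (e ** k)) = Re (tr (hk k)) * Re (tr (e ** k ** l))" if l: "l \<in> L" for l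
    proof -
      have lS: "l \<in> summands A11" using l by (simp add: L_def)
      have c: "tr (hk k ** l) * tr (e ** k) = tr (hk k) * tr (e ** k ** l)"
        unfolding hk_def by (rule T7gen[OF usa11 usa01 sub01 tr E(2) kS lS e01])
      have P11: "hk k ** l \<in> A11" by (rule usaD(4)[OF usa11 f11 lD(1)[OF l]])
      have Pp: "is_proj (hk k ** l)" by (rule proj_prod[OF fp lD(2)[OF l]]) (use lD(3)[OF l f11] in simp)
      have Q11: "e ** k ** l \<in> A11" by (rule usaD(4)[OF usa11 ekp(3)[OF k] lD(1)[OF l]])
      have Qp: "is_proj (e ** k ** l)" by (rule proj_prod[OF ekp(1)[OF k] lD(2)[OF l]]) (use lD(3)[OF l ekp(3)[OF k]] in simp)
      have i1: "Im (tr (hk k ** l)) = 0" by (rule tr_proj(1)[OF tr P11 Pp])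
      have i2: "Im (tr (e ** k)) = 0" by (rule tr_proj(1)[OF tr ekp(3)[OF k] ekp(1)[OF k]])
      have i3: "Im (tr (hk k)) = 0" by (rule tr_proj(1)[OF tr f11 fp])
      have i4: "Im (tr (e ** k ** l)) = 0" by (rule tr_proj(1)[OF tr Q11 Qp])
      have "Re (tr (hk k ** l) * tr (e ** k)) = Re (tr (hk k) * tr (e ** k ** l))" using c by simp
      then show ?thesis using i1 i2 i3 i4 by simp
    qed
    have wk: "w k = (\<Sum>l\<in>L. a l powr p * Re (tr (hk k ** l)) / Re (tr (hk k)))"
      unfolding w_def tv01[symmetric]
    proof (rule sum.cong[OF refl])
      fix l assume l: "l \<in> L"
      show "incl_mat A01 A11 k l * a l powr p * trace_vec tr A11 l / trace_vec tr A01 k = a l powr p * Re (tr (hk k ** l)) / trace_vec tr A01 k"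
        using incl1[OF l] by (simp add: mult_ac)
    qed
    have w0: "0 \<le> w k" unfolding wk
      using phi tr_proj(2)[OF tr usaD(4)[OF usa11 f11 lD(1)] proj_prod[OF fp lD(2)]] lD(3)[OF _ f11]
      by (intro sum_nonneg divide_nonneg_nonneg mult_nonneg_nonneg) (auto simp: L_def)
    have "w k * Re (tr (e ** k)) = (\<Sum>l\<in>L. a l powr p * Re (tr (e ** k ** l)))"
      unfolding wk sum_distrib_right
    proof (rule sum.cong[OF refl])
      fix l assume l: "l \<in> L"
      have "a l powr p * Re (tr (hk k ** l)) / Re (tr (hk k)) * Re (tr (e ** k)) = a l powr p * (Re (tr (hk k ** l)) * Re (tr (e ** k))) / Re (tr (hk k))"
        by simp
      also have "\<dots> = a l powr p * Re (tr (e ** k ** l))" using t7[OF l] phi by simp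
      finally show "a l powr p * Re (tr (hk k ** l)) / Re (tr (hk k)) * Re (tr (e ** k)) = a l powr p * Re (tr (e ** k ** l))" .
    qed
    then have "w k * (\<Sum>j\<in>J. \<Sum>l\<in>L. om j k l) = (\<Sum>l\<in>L. a l powr p * (\<Sum>j\<in>J. om j k l))"
      using GK[OF k] sJ[OF k] by simp
    then show ?thesis using w0 incl2 GK[OF k] by simp
  qed
  have main: "(\<Sum>j\<in>J. y j powr p * (\<Sum>k\<in>K. \<Sum>l\<in>L. om j k l) / V) powr (1 / p)
       \<le> (\<Sum>k\<in>K. w k powr (1 / p) * (\<Sum>j\<in>J. \<Sum>l\<in>L. om j k l) / V)"
  proof (rule comb[OF finJ finK finL p V])
    show "\<And>j k l. j \<in> J \<Longrightarrow> k \<in> K \<Longrightarrow> l \<in> L \<Longrightarrow> 0 \<le> om j k l" by (rule om0)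
    show "\<And>l. l \<in> L \<Longrightarrow> 0 \<le> a l" using a by (simp add: L_def)
    show "\<And>j k. j \<in> J \<Longrightarrow> k \<in> K \<Longrightarrow> (\<Sum>l\<in>L. om j k l) * V = (\<Sum>k'\<in>K. \<Sum>l\<in>L. om j k' l) * (\<Sum>j'\<in>J. \<Sum>l\<in>L. om j' k l)"
      by (rule hjk)
    show "\<And>j. j \<in> J \<Longrightarrow> 0 \<le> y j" using jterm by blast
    show "\<And>j. j \<in> J \<Longrightarrow> 0 < (\<Sum>k\<in>K. \<Sum>l\<in>L. om j k l) \<Longrightarrow>
       y j * (\<Sum>k\<in>K. \<Sum>l\<in>L. om j k l) = (\<Sum>l\<in>L. a l * (\<Sum>k\<in>K. om j k l))" using jterm by blast
    show "\<And>k. k \<in> K \<Longrightarrow> 0 \<le> w k" using kterm by blast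
    show "\<And>k. k \<in> K \<Longrightarrow> 0 < (\<Sum>j\<in>J. \<Sum>l\<in>L. om j k l) \<Longrightarrow>
       w k * (\<Sum>j\<in>J. \<Sum>l\<in>L. om j k l) = (\<Sum>l\<in>L. a l powr p * (\<Sum>j\<in>J. om j k l))" using kterm by blast
  qed
  have lhs: "(\<Sum>j\<in>summands A10.
            (\<Sum>l\<in>summands A11. incl_mat A10 A11 j l * a l * trace_vec tr A11 l
                                   / trace_vec tr A10 j) powr p
            * incl_mat A00 A10 i j * trace_vec tr A10 j / trace_vec tr A00 i)
      = (\<Sum>j\<in>J. y j powr p * (\<Sum>k\<in>K. \<Sum>l\<in>L. om j k l) / V)"
    unfolding J_def[symmetric] L_def[symmetric] y_def[symmetric] tv00
  proof (rule sum.cong[OF refl])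
    fix j assume j: "j \<in> J"
    have "y j powr p * incl_mat A00 A10 i j * trace_vec tr A10 j / V = y j powr p * (incl_mat A00 A10 i j * trace_vec tr A10 j) / V"
      by (simp add: mult.assoc)
    also have "\<dots> = y j powr p * (\<Sum>k\<in>K. \<Sum>l\<in>L. om j k l) / V" using jterm[OF j] by simp
    finally show "y j powr p * incl_mat A00 A10 i j * trace_vec tr A10 j / V = y j powr p * (\<Sum>k\<in>K. \<Sum>l\<in>L. om j k l) / V" .
  qed
  have rhs: "(\<Sum>k\<in>summands A01.
            (\<Sum>l\<in>summands A11. incl_mat A01 A11 k l * a l powr p * trace_vec tr A11 l
                                   / trace_vec tr A01 k) powr (1 / p)
            * incl_mat A00 A01 i k * trace_vec tr A01 k / trace_vec tr A00 i)
      = (\<Sum>k\<in>K. w k powr (1 / p) * (\<Sum>j\<in>J. \<Sum>l\<in>L. om j k l) / V)"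
    unfolding K_def[symmetric] L_def[symmetric] w_def[symmetric] tv00
  proof (rule sum.cong[OF refl])
    fix k assume k: "k \<in> K"
    have "w k powr (1 / p) * incl_mat A00 A01 i k * trace_vec tr A01 k / V = w k powr (1 / p) * (incl_mat A00 A01 i k * trace_vec tr A01 k) / V"
      by (simp add: mult.assoc)
    also have "\<dots> = w k powr (1 / p) * (\<Sum>j\<in>J. \<Sum>l\<in>L. om j k l) / V" using kterm[OF k] by simp
    finally show "w k powr (1 / p) * incl_mat A00 A01 i k * trace_vec tr A01 k / V = w k powr (1 / p) * (\<Sum>j\<in>J. \<Sum>l\<in>L. om j k l) / V" .
  qed
  show ?thesis unfolding lhs rhs by (rule main)
qed

end
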